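(* Let $C_1,C_2,\gamma$ be positive real numbers and let $(t_n)_{n\ge1}$ be a sequence of real numbers with $C_1n^\gamma\le t_n\le C_2 n^\gamma$ for all $n\ge1$. Then there exist a constant $C>0$ and an integer $n_0\ge 2$ such that the set $$\bigcap_{n\ge n_0}\Bigl\{\xi\in\mathbb{R}:\ \|\xi t_n\|>\frac{C}{n\log n}\Bigr\}$$ has Hausdorff dimension $1$.
   Context: For a real number $x$, $\|x\|$ denotes the distance from $x$ to the nearest integer. *)

theory Defs
  imports "HOL-Analysis.Analysis"
begin

definition dist_int :: "real \<Rightarrow> real" where
  "dist_int x = \<bar>x - of_int (round x)\<bar>"

definition hausdorff_pre :: "real \<Rightarrow> real \<Rightarrow> real set \<Rightarrow> ennreal" where
  "hausdorff_pre s \<delta> A =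
     (INF U \<in> {U :: nat \<Rightarrow> real set. A \<subseteq> (\<Union>i. U i) \<and>
                   (\<forall>i. bounded (U i) \<and> diameter (U i) \<le> \<delta>)}.
        (\<Sum>i. ennreal (diameter (U i) powr s)))"

text \<open>s-dimensional Hausdorff outer measure (limit as delta tends to 0, which is a supremum).\<close>
definition hausdorff_measure :: "real \<Rightarrow> real set \<Rightarrow> ennreal" where
  "hausdorff_measure s A = (SUP \<delta> \<in> {0<..}. hausdorff_pre s \<delta> A)"

definition hausdorff_dim :: "real set \<Rightarrow> real" where
  "hausdorff_dim A = Inf {s. 0 < s \<and> hausdorff_measure s A = 0}"

end

theory Submission
  imports Defs "HOL-Real_Asymp.Real_Asymp"
begin

lemma card_int_interval:
  fixes a b :: real
  shows "finite {j::int. a \<le> of_int j \<and> of_int j \<le> b}"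
    and "real (card {j::int. a \<le> of_int j \<and> of_int j \<le> b}) \<le> max 0 (b - a + 1)"
proof -
  have eq: "{j::int. a \<le> of_int j \<and> of_int j \<le> b} = {\<lceil>a\<rceil>..\<lfloor>b\<rfloor>}"
    by (auto simp: ceiling_le_iff le_floor_iff)
  show "finite {j::int. a \<le> of_int j \<and> of_int j \<le> b}" unfolding eq by simp
  have "real (card {\<lceil>a\<rceil>..\<lfloor>b\<rfloor>}) \<le> max 0 (b - a + 1)"
  proof (cases "\<lceil>a\<rceil> \<le> \<lfloor>b\<rfloor>")
    case True
    then have "real (card {\<lceil>a\<rceil>..\<lfloor>b\<rfloor>}) = of_int (\<lfloor>b\<rfloor> - \<lceil>a\<rceil> + 1)" by simp
    also have "\<dots> \<le> b - a + 1" using of_int_floor_le[of b] le_of_int_ceiling[of a] by linarith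
    finally show ?thesis by simp
  next
    case False then show ?thesis by simp
  qed
  then show "real (card {j::int. a \<le> of_int j \<and> of_int j \<le> b}) \<le> max 0 (b - a + 1)" unfolding eq .
qed

lemma card_nat_interval:
  fixes a b :: real
  shows "finite {j::nat. a \<le> real j \<and> real j \<le> b}"
    and "real (card {j::nat. a \<le> real j \<and> real j \<le> b}) \<le> max 0 (b - a + 1)"
proof -
  have sub: "int ` {j::nat. a \<le> real j \<and> real j \<le> b} \<subseteq> {j::int. a \<le> of_int j \<and> of_int j \<le> b}"
    by auto
  have inj: "inj_on int {j::nat. a \<le> real j \<and> real j \<le> b}" by (simp add: inj_on_def)
  have fin: "finite (int ` {j::nat. a \<le> real j \<and> real j \<le> b})"
    using finite_subset[OF sub card_int_interval(1)] .
  then show "finite {j::nat. a \<le> real j \<and> real j \<le> b}"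
    using finite_imageD[OF _ inj] by blast
  have "card {j::nat. a \<le> real j \<and> real j \<le> b} = card (int ` {j::nat. a \<le> real j \<and> real j \<le> b})"
    using card_image[OF inj] by simp
  also have "\<dots> \<le> card {j::int. a \<le> of_int j \<and> of_int j \<le> b}"
    by (rule card_mono[OF card_int_interval(1) sub])
  finally show "real (card {j::nat. a \<le> real j \<and> real j \<le> b}) \<le> max 0 (b - a + 1)"
    using card_int_interval(2)[of a b] by linarith
qed

lemma bad_count:
  fixes t \<epsilon> :: real and Mk M2 i :: nat
  assumes tpos: "t > 0" and ep: "0 < \<epsilon>" "\<epsilon> \<le> 1/2" and Mk: "Mk \<ge> 1" and M2: "M2 \<ge> 1"
    and tM: "t \<ge> Mk" and eM: "\<epsilon> * (Mk*M2) \<ge> t"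
  shows "real (card {y \<in> {i*M2..<(i+1)*M2}. \<exists>x. real y/(Mk*M2) \<le> x \<and> x < (real y+1)/(Mk*M2) \<and> dist_int (x*t) \<le> \<epsilon>})
           \<le> 12*\<epsilon>*M2"
proof -
  define M where "M = real Mk * real M2"
  have Mpos: "M > 0" using Mk M2 by (simp add: M_def)
  define J where "J = {j::int. t*i/Mk - \<epsilon> \<le> of_int j \<and> of_int j \<le> t*(i+1)/Mk + \<epsilon>}"
  define Y where "Y = (\<lambda>j::int. {y::nat. M*(j-\<epsilon>)/t - 1 \<le> real y \<and> real y \<le> M*(j+\<epsilon>)/t})"
  let ?B = "{y \<in> {i*M2..<(i+1)*M2}. \<exists>x. real y/(Mk*M2) \<le> x \<and> x < (real y+1)/(Mk*M2) \<and> dist_int (x*t) \<le> \<epsilon>}"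
  have sub: "?B \<subseteq> (\<Union>j\<in>J. Y j)"
  proof
    fix y assume "y \<in> ?B"
    then obtain x where y: "i*M2 \<le> y" "y < (i+1)*M2" and x: "real y/M \<le> x" "x < (real y+1)/M" "dist_int (x*t) \<le> \<epsilon>"
      by (auto simp: M_def)
    define j where "j = round (x*t)"
    have xj: "\<bar>x*t - of_int j\<bar> \<le> \<epsilon>" using x(3) by (simp add: dist_int_def j_def)
    have "real (i*M2) \<le> real y" using y(1) by linarith
    then have "real i * M2 / M \<le> real y / M" using Mpos by (simp add: divide_right_mono)
    then have "real i * M2 / M \<le> x" using x(1) by linarith
    then have xlo: "real i / Mk \<le> x" using M2 by (simp add: M_def)
    have "real y + 1 \<le> real ((i+1)*M2)" using y(2) by linarith
    then have "x < real ((i+1)*M2)/M" using x(2) Mpos by (smt (verit) divide_right_mono)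
    moreover have "real ((i+1)*M2)/M = (real i + 1)/Mk"
    proof -
      have "real M2 > 0" "real Mk > 0" using M2 Mk by auto
      then show ?thesis by (simp add: M_def field_simps)
    qed
    ultimately have xhi: "x < (real i + 1)/Mk" by simp
    have "t*(i/Mk) \<le> t*x" by (rule mult_left_mono[OF xlo]) (use tpos in simp)
    then have "t*i/Mk \<le> x*t" by (simp add: mult.commute)
    moreover have "x*t \<le> t*(i+1)/Mk"
    proof -
      have "t*x \<le> t*((real i+1)/Mk)" by (rule mult_left_mono) (use xhi tpos in simp_all)
      then show ?thesis by (simp add: mult.commute add.commute)
    qed
    ultimately have "j \<in> J" using xj unfolding J_def by auto
    moreover have "y \<in> Y j"
    proof -
      have "x \<le> (j+\<epsilon>)/t" using xj tpos by (simp add: field_simps abs_le_iff)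
      moreover have "(j-\<epsilon>)/t \<le> x" using xj tpos by (simp add: field_simps abs_le_iff)
      moreover have "real y \<le> x*M" using x(1) Mpos by (simp add: field_simps)
      moreover have "x*M < real y + 1" using x(2) Mpos by (simp add: field_simps)
      ultimately have "real y \<le> M*(j+\<epsilon>)/t" "M*(j-\<epsilon>)/t - 1 \<le> real y"
        using Mpos by (smt (verit) mult.commute mult_left_mono times_divide_eq_right)+
      then show ?thesis by (simp add: Y_def)
    qed
    ultimately show "y \<in> (\<Union>j\<in>J. Y j)" by blast
  qed
  have finJ: "finite J" unfolding J_def by (rule card_int_interval(1))
  have finY: "\<And>j. finite (Y j)" unfolding Y_def by (rule card_nat_interval(1))
  have cY: "\<And>j. real (card (Y j)) \<le> 4*\<epsilon>*M/t"
  proof -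
    fix j
    have "real (card (Y j)) \<le> max 0 (M*(j+\<epsilon>)/t - (M*(j-\<epsilon>)/t - 1) + 1)"
      unfolding Y_def by (rule card_nat_interval(2))
    also have "M*(j+\<epsilon>)/t - (M*(j-\<epsilon>)/t - 1) + 1 = 2*\<epsilon>*M/t + 2" using tpos by (simp add: field_simps)
    also have "max 0 (2*\<epsilon>*M/t + 2) \<le> 4*\<epsilon>*M/t"
    proof -
      have "\<epsilon>*M/t \<ge> 1" using eM tpos by (simp add: M_def field_simps)
      then show ?thesis using ep Mpos tpos by (simp add: field_simps)
    qed
    finally show "real (card (Y j)) \<le> 4*\<epsilon>*M/t" .
  qed
  have cJ: "real (card J) \<le> 3*t/Mk"
  proof -
    have "real (card J) \<le> max 0 (t*(i+1)/Mk + \<epsilon> - (t*i/Mk - \<epsilon>) + 1)"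
      unfolding J_def by (rule card_int_interval(2))
    also have "t*(i+1)/Mk + \<epsilon> - (t*i/Mk - \<epsilon>) + 1 = t/Mk + 2*\<epsilon> + 1" using Mk by (simp add: field_simps)
    also have "max 0 (t/Mk + 2*\<epsilon> + 1) \<le> 3*t/Mk"
    proof -
      have "t/Mk \<ge> 1" using tM Mk by (simp add: field_simps)
      moreover have "3*t/Mk = 3*(t/Mk)" by simp
      ultimately show ?thesis using ep by linarith
    qed
    finally show ?thesis .
  qed
  have "real (card ?B) \<le> real (card (\<Union>j\<in>J. Y j))"
    using card_mono[OF _ sub] finJ finY by simp
  also have "\<dots> \<le> real (\<Sum>j\<in>J. card (Y j))" using card_UN_le[OF finJ, of Y] by linarith
  also have "\<dots> = (\<Sum>j\<in>J. real (card (Y j)))" by simp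
  also have "\<dots> \<le> (\<Sum>j\<in>J. 4*\<epsilon>*M/t)" by (rule sum_mono) (rule cY)
  also have "\<dots> = real (card J) * (4*\<epsilon>*M/t)" by simp
  also have "\<dots> \<le> (3*t/Mk) * (4*\<epsilon>*M/t)"
    by (rule mult_right_mono[OF cJ]) (use ep Mpos tpos in simp)
  also have "\<dots> = 12*\<epsilon>*M2" using tpos Mk by (simp add: M_def field_simps)
  finally show ?thesis .
qed


lemma ln_ge_one_minus_inv: "y > 0 \<Longrightarrow> 1 - 1/y \<le> ln (y::real)"
proof -
  assume y: "y > 0"
  have "ln (1/y) \<le> 1/y - 1" using ln_le_minus_one[of "1/y"] y by simp
  then show ?thesis using y by (simp add: ln_div)
qed

lemma lnln_step:
  fixes n :: real assumes n: "n \<ge> 3"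
  shows "1/(n * ln n) \<le> ln (ln n) - ln (ln (n-1))"
proof -
  have l1: "ln (n-1) > 0" using n by simp
  have l2: "ln n > 0" using n by simp
  have "ln ((n-1)/n) \<le> (n-1)/n - 1" by (rule ln_le_minus_one) (use n in simp)
  then have "ln (n-1) - ln n \<le> -1/n" using n by (simp add: ln_div field_simps)
  then have d: "1/n \<le> ln n - ln (n-1)" by simp
  have "1 - ln (n-1)/ln n \<le> ln (ln n / ln (n-1))"
    using ln_ge_one_minus_inv[of "ln n / ln (n-1)"] l1 l2 by simp
  also have "\<dots> = ln (ln n) - ln (ln (n-1))" using l1 l2 by (simp add: ln_div)
  finally have e: "1 - ln (n-1)/ln n \<le> ln (ln n) - ln (ln (n-1))" .
  have "1 - ln (n-1)/ln n = (ln n - ln (n-1))/ln n" using l2 by (simp add: field_simps)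
  moreover have "1/(n*ln n) = (1/n)/ln n" by simp
  moreover have "(1/n)/ln n \<le> (ln n - ln (n-1))/ln n" by (rule divide_right_mono) (use d l2 in auto)
  ultimately show ?thesis using e by linarith
qed

lemma sum_lnln:
  fixes A B :: nat assumes A: "A \<ge> 3" and AB: "A \<le> B"
  shows "(\<Sum>n\<in>{A..<B}. 1/(real n * ln (real n))) \<le> ln (ln (real B - 1)) - ln (ln (real A - 1))"
  using AB
proof (induction B rule: dec_induct)
  case base then show ?case by simp
next
  case (step B)
  have "(\<Sum>n\<in>{A..<Suc B}. 1/(real n * ln (real n))) = (\<Sum>n\<in>{A..<B}. 1/(real n * ln (real n))) + 1/(real B * ln (real B))"
    using step(1) by simp
  also have "\<dots> \<le> ln (ln (real B - 1)) - ln (ln (real A - 1)) + (ln (ln (real B)) - ln (ln (real B - 1)))"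
    using step(3) lnln_step[of "real B"] step(1) A by simp
  finally show ?case by simp
qed

lemma block_sum:
  fixes Y D :: nat assumes Y: "Y \<ge> 2" and D: "D \<ge> 2"
  shows "(\<Sum>n\<in>{2^Y..<2^(D*Y)}. 1/(real n * ln (real n))) \<le> ln (2*D)"
proof -
  have A3: "(2::nat)^Y \<ge> 3"
  proof -
    have "(2::nat)^Y \<ge> 2^2" using Y by (rule power_increasing) simp
    then show ?thesis by simp
  qed
  have AB: "(2::nat)^Y \<le> 2^(D*Y)" using D by (intro power_increasing) auto
  have "(\<Sum>n\<in>{2^Y..<2^(D*Y)}. 1/(real n * ln (real n))) \<le> ln (ln (real (2^(D*Y)) - 1)) - ln (ln (real (2^Y) - 1))"
    by (rule sum_lnln[OF A3 AB])
  also have "\<dots> \<le> ln (ln (2 ^ (D*Y))) - ln (ln (2^(Y-1)))"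
  proof -
    have B3: "real (2^(D*Y)) \<ge> 3" using A3 AB by linarith
    have "ln (ln (real (2^(D*Y)) - 1)) \<le> ln (ln (2 ^ (D*Y)))"
      using B3 by (subst ln_le_cancel_iff) auto
    moreover have "ln (ln (2^(Y-1))) \<le> ln (ln (real (2^Y) - 1))"
    proof -
      have "(2::real)^1 \<le> 2^(Y-1)" by (rule power_increasing) (use Y in auto)
      then have "(2::real)^(Y-1) \<ge> 2" by simp
      moreover have "(2::real)^Y = 2 * 2^(Y-1)" using Y by (cases Y) auto
      ultimately have "(2::real)^(Y-1) \<le> real (2^Y) - 1" by simp
      moreover have "ln ((2::real)^(Y-1)) > 0" using \<open>(2::real)^(Y-1) \<ge> 2\<close> by simp
      ultimately show ?thesis by (subst ln_le_cancel_iff) auto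
    qed
    ultimately show ?thesis by linarith
  qed
  also have "\<dots> = ln (real (D*Y) * ln 2) - ln (real (Y-1) * ln 2)"
    by (simp add: ln_realpow)
  also have "\<dots> = ln (real (D*Y) / real (Y-1))"
    using Y D by (simp add: ln_div ln_mult)
  also have "\<dots> \<le> ln (2*D)"
  proof -
    have "real (D*Y) / real (Y-1) \<le> 2*D"
    proof -
      have "real Y \<le> 2 * real (Y-1)" using Y by linarith
      then have "real D * real Y \<le> 2 * real D * real (Y-1)" using D by (simp add: mult_left_mono)
      moreover have "real (Y-1) > 0" using Y by simp
      ultimately show ?thesis by (simp add: field_simps)
    qed
    moreover have "real (D*Y) / real (Y-1) > 0" using Y D by simp
    ultimately show ?thesis by simp
  qed
  finally show ?thesis .
qed


locale setting =
  fixes t :: "nat \<Rightarrow> real" and \<gamma> C1 C2 :: real and E D a :: nat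
  assumes C1: "C1 > 0" and C2: "C2 > 0" and g: "\<gamma> > 0"
    and tb: "\<forall>n\<ge>1. C1 * real n powr \<gamma> \<le> t n \<and> t n \<le> C2 * real n powr \<gamma>"
    and E: "real E \<ge> 2*\<gamma> + 4" and D: "D \<ge> 2" and DE: "real D * \<gamma> \<ge> real E + 1"
    and a2: "a \<ge> 2" and aC1: "C1 * 2^a \<ge> 1"
    and aK: "\<forall>x\<ge>a. (C2 * 768 * ln (2*real D)) * real x \<le> 2^x"
begin

definition "C = 1/(768 * ln (2*real D))"
definition "e k = E*a*(D^k - 1)"
definition "M k = (2::nat)^(e k)"
definition "Rs k = (2::nat)^(e (Suc k) - e k)"
definition "N j = (2::nat)^(a*D^j)"
definition "blk L = (if 2 \<le> L then {N (L-1)..<N L} else {})"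
definition "eps n = C/(real n * ln (real n))"

lemma Cpos: "C > 0" using D by (simp add: C_def)

lemma E4: "E \<ge> 4" using E g by linarith

lemma e_mono: "e k \<le> e (Suc k)"
  unfolding e_def using D by (intro mult_le_mono2 diff_le_mono) simp

lemma e_diff: "e (Suc k) - e k \<ge> 8"
proof -
  have "e (Suc k) - e k = E*a*(D^Suc k - D^k)"
    unfolding e_def using D by (simp add: diff_mult_distrib2)
  moreover have d1: "D^Suc k - D^k \<ge> 1"
  proof -
    have "D^k \<ge> 1" using D by simp
    moreover have "D * D^k \<ge> 2 * D^k" using D by simp
    ultimately show ?thesis by (simp only: power_Suc)
  qed
  moreover have d2: "E*a \<ge> 4*2" using E4 a2 by (intro mult_le_mono)
  ultimately have "E*a*(D^Suc k - D^k) \<ge> (4*2)*1" using mult_le_mono[OF d2 d1] by simp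
  then show ?thesis using \<open>e (Suc k) - e k = _\<close> by simp
qed

lemma M_Suc: "M (Suc k) = M k * Rs k"
  unfolding M_def Rs_def using e_mono[of k] by (simp add: power_add[symmetric])

lemma M_pos: "M k \<ge> 1" by (simp add: M_def)
lemma Rs_ge: "Rs k \<ge> 256"
proof -
  have "(2::nat)^8 \<le> 2^(e (Suc k) - e k)" by (rule power_increasing) (use e_diff in auto)
  then show ?thesis by (simp add: Rs_def)
qed
lemma Rs_dvd: "8 dvd Rs k"
proof -
  have "e (Suc k) - e k = 3 + (e (Suc k) - e k - 3)" using e_diff[of k] by simp
  then have "Rs k = 2^3 * 2^(e (Suc k) - e k - 3)" unfolding Rs_def by (metis power_add)
  then have "Rs k = 8 * 2^(e (Suc k) - e k - 3)" by (simp only: numeral_3_eq_3 power_Suc power_0) 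
  then show ?thesis by (metis dvd_triv_left)
qed

end

context setting begin

lemma blk_mem: "n \<in> blk L \<Longrightarrow> 2 \<le> L \<and> N (L-1) \<le> n \<and> n < N L"
  by (auto simp: blk_def split: if_splits)

lemma N_ge4: "N j \<ge> 4"
proof -
  have "D^j \<ge> 1" using D by simp
  then have h: "a*1 \<le> a*D^j" by (rule mult_le_mono2)
  have "a*D^j \<ge> 2" using h a2 by linarith
  then have "(2::nat)^2 \<le> 2^(a*D^j)" by (intro power_increasing) auto
  then show ?thesis by (simp add: N_def)
qed

lemma blk_ge4: "n \<in> blk L \<Longrightarrow> n \<ge> 4"
  using blk_mem N_ge4 le_trans by blast

lemma t_lo: "n \<ge> 1 \<Longrightarrow> C1 * real n powr \<gamma> \<le> t n" using tb by auto
lemma t_hi: "n \<ge> 1 \<Longrightarrow> t n \<le> C2 * real n powr \<gamma>" using tb by auto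

lemma t_pos: "n \<ge> 1 \<Longrightarrow> t n > 0"
proof -
  assume n: "n \<ge> 1"
  have "C1 * real n powr \<gamma> > 0" using C1 n by simp
  then show ?thesis using t_lo[OF n] by linarith
qed

lemma two_pow_powr: "real ((2::nat)^k) powr x = 2 powr (real k * x)"
  by (simp add: powr_powr[symmetric] powr_realpow)

lemma N1: assumes n: "n \<in> blk L" shows "real (M (L-2)) \<le> t n"
proof -
  from blk_mem[OF n] have L: "2 \<le> L" and nlo: "N (L-1) \<le> n" by auto
  define Z where "Z = a*D^(L-2)"
  have LL: "L-1 = Suc (L-2)" using L by simp
  have Y: "a*D^(L-1) = D*Z" unfolding Z_def LL by simp
  have n1: "n \<ge> 1" using blk_ge4[OF n] by simp
  have "real (N (L-1)) powr \<gamma> \<le> real n powr \<gamma>" using nlo g by (intro powr_mono2) auto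
  moreover have "real (N (L-1)) powr \<gamma> = 2 powr (real (D*Z) * \<gamma>)"
    unfolding N_def Y by (rule two_pow_powr)
  moreover have "2 powr (real (D*Z) * \<gamma>) \<ge> 2 powr (real (E*Z) + real Z)"
  proof -
    have "real (D*Z) * \<gamma> = (real D * \<gamma>) * real Z" by simp
    also have "\<dots> \<ge> (real E + 1) * real Z" using DE by (intro mult_right_mono) auto
    finally show ?thesis by (simp add: algebra_simps)
  qed
  moreover have "2 powr (real (E*Z) + real Z) = 2^(E*Z) * 2^Z"
  proof -
    have h1: "2 powr real (E*Z) = (2::real)^(E*Z)" by (rule powr_realpow) simp
    have h2: "2 powr real Z = (2::real)^Z" by (rule powr_realpow) simp
    show ?thesis by (simp only: powr_add h1 h2)
  qed
  ultimately have "real n powr \<gamma> \<ge> 2^(E*Z) * 2^Z" by linarith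
  then have "C1 * (2^(E*Z) * 2^Z) \<le> C1 * real n powr \<gamma>" by (rule mult_left_mono) (use C1 in auto)
  then have "t n \<ge> C1 * (2^(E*Z) * 2^Z)" using t_lo[OF n1] by linarith
  moreover have "C1 * 2^Z \<ge> 1"
  proof -
    have "Z \<ge> a" unfolding Z_def using D by simp
    then have "(2::real)^a \<le> 2^Z" by (intro power_increasing) auto
    then have "C1 * 2^a \<le> C1 * 2^Z" by (rule mult_left_mono) (use C1 in auto)
    then show ?thesis using aC1 by linarith
  qed
  ultimately have "t n \<ge> 2^(E*Z)"
  proof -
    assume a1: "t n \<ge> C1 * (2^(E*Z) * 2^Z)" and a2': "C1 * 2^Z \<ge> 1"
    have "(2::real)^(E*Z) * 1 \<le> 2^(E*Z) * (C1 * 2^Z)" by (rule mult_left_mono) (use a2' in auto)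
    moreover have "C1 * (2^(E*Z) * 2^Z) = (2::real)^(E*Z) * (C1 * 2^Z)" by simp
    ultimately show ?thesis using a1 by linarith
  qed
  moreover have "M (L-2) \<le> 2^(E*Z)"
    unfolding M_def e_def Z_def by (intro power_increasing) auto
  ultimately show ?thesis
    by (metis of_nat_le_iff of_nat_numeral of_nat_power order_trans)
qed

lemma Cbound: "C * ln (2*real D) = 1/768"
proof -
  have "ln (2*real D) > 0" using D by simp
  then show ?thesis by (simp add: C_def)
qed

lemma N2: assumes n: "n \<in> blk L" shows "t n \<le> eps n * M L"
proof -
  from blk_mem[OF n] have L: "2 \<le> L" and nhi: "n < N L" by auto
  define X where "X = a*D^L"
  have n4: "n \<ge> 4" using blk_ge4[OF n] .
  have n1: "n \<ge> 1" using n4 by simp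
  have Xa: "X \<ge> a" unfolding X_def using D by simp
  have "real n < real (N L)" using nhi by simp
  moreover have "real (N L) = 2^X" by (simp add: N_def X_def)
  ultimately have nX: "real n \<le> 2^X" by simp
  have pg: "real n powr \<gamma> \<le> 2 powr (real X * \<gamma>)"
  proof -
    have "real n powr \<gamma> \<le> real ((2::nat)^X) powr \<gamma>" using nX g by (intro powr_mono2) auto
    then show ?thesis using two_pow_powr[of X \<gamma>] by simp
  qed
  have lnn: "ln (real n) \<le> real X"
  proof -
    have "ln (real n) \<le> ln (2^X)" using nX n4 by simp
    also have "\<dots> = real X * ln 2" by (simp add: ln_realpow)
    also have "\<dots> \<le> real X" using ln_2_less_1 by (simp add: mult_left_le)
    finally show ?thesis .
  qed
  have lnpos: "ln (real n) > 0" using n4 by simp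
  have K: "(C2/C) * real X \<le> 2^X"
  proof -
    have "C2/C = C2 * 768 * ln (2*real D)" using Cpos Cbound by (simp add: C_def)
    then show ?thesis using aK Xa by simp
  qed
  have eL: "real (e L) \<ge> (\<gamma>+2) * real X"
  proof -
    have "D^1 \<le> D^L" using D L by (intro power_increasing) auto
    then have DL: "D^L \<ge> 2" using D by simp
    have "real (e L) = real E * real a * (real (D^L) - 1)" unfolding e_def using DL by (simp add: of_nat_diff)
    also have "\<dots> \<ge> real E * real a * (real (D^L) / 2)"
    proof (intro mult_left_mono)
      have "(2::real) \<le> real D ^ L" using DL by (metis of_nat_numeral of_nat_le_iff of_nat_power)
      then show "real (D^L) / 2 \<le> real (D^L) - 1" by simp
    qed auto
    also have "real E * real a * (real (D^L) / 2) = (real E / 2) * real X" by (simp add: X_def)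
    also have "(real E/2) * real X \<ge> (\<gamma>+2) * real X" using E by (intro mult_right_mono) auto
    finally show ?thesis .
  qed
  have MLb: "real (M L) \<ge> 2 powr (real X * \<gamma>) * 2^X * 2^X"
  proof -
    have "real (M L) = 2 powr real (e L)" by (simp add: M_def powr_realpow)
    also have "\<dots> \<ge> 2 powr ((\<gamma>+2) * real X)" using eL by simp
    also have "2 powr ((\<gamma>+2) * real X) = 2 powr (real X * \<gamma>) * 2 powr real X * 2 powr real X"
      by (simp add: powr_add[symmetric] algebra_simps)
    finally show ?thesis by (simp add: powr_realpow)
  qed
  have "real n * ln (real n) \<le> 2^X * real X" by (rule mult_mono) (use nX lnn lnpos in auto)
  then have "real n powr \<gamma> * (real n * ln (real n)) \<le> 2 powr (real X * \<gamma>) * (2^X * real X)"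
    by (rule mult_mono[OF pg]) (use lnpos n4 in auto)
  then have "C2 * (real n powr \<gamma> * (real n * ln (real n))) \<le> C2 * (2 powr (real X * \<gamma>) * (2^X * real X))"
    by (rule mult_left_mono) (use C2 in auto)
  then have "C2 * real n powr \<gamma> * (real n * ln (real n)) \<le> C2 * 2 powr (real X * \<gamma>) * (2^X * real X)"
    by (simp add: mult.assoc)
  also have "\<dots> = C * (2 powr (real X * \<gamma>) * 2^X * ((C2/C) * real X))"
  proof -
    have "C \<noteq> 0" using Cpos by simp
    then show ?thesis by (simp add: field_simps)
  qed
  also have "\<dots> \<le> C * (2 powr (real X * \<gamma>) * 2^X * 2^X)"
    by (rule mult_left_mono[OF mult_left_mono[OF K]]) (use Cpos in auto)
  also have "\<dots> \<le> C * real (M L)" by (rule mult_left_mono[OF MLb]) (use Cpos in auto)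
  finally have main: "C2 * real n powr \<gamma> * (real n * ln (real n)) \<le> C * real (M L)" .
  have "t n \<le> C2 * real n powr \<gamma>" by (rule t_hi[OF n1])
  also have "\<dots> \<le> C * real (M L) / (real n * ln (real n))"
    by (subst pos_le_divide_eq) (use main n4 lnpos in auto)
  also have "\<dots> = eps n * M L" by (simp add: eps_def)
  finally show ?thesis .
qed

lemma N3: assumes L: "L \<ge> 2" shows "(\<Sum>n\<in>blk L. eps n) \<le> 1/768"
proof -
  define Y where "Y = a*D^(L-1)"
  have "D^(L-1) \<ge> 1" using D by simp
  then have h: "a*1 \<le> a*D^(L-1)" by (rule mult_le_mono2)
  have Y2: "Y \<ge> 2" unfolding Y_def using h a2 by linarith
  have LL: "L = Suc (L-1)" using L by simp
  have NL: "N L = 2^(D*Y)" unfolding N_def Y_def by (subst LL) simp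
  have NL1: "N (L-1) = 2^Y" unfolding N_def Y_def by simp
  have blk: "blk L = {2^Y..<2^(D*Y)}" using L NL NL1 by (simp add: blk_def)
  have "(\<Sum>n\<in>blk L. eps n) = C * (\<Sum>n\<in>{2^Y..<2^(D*Y)}. 1/(real n * ln (real n)))"
    by (simp add: blk eps_def sum_distrib_left)
  also have "\<dots> \<le> C * ln (2*real D)" using block_sum[OF Y2 D] Cpos by (intro mult_left_mono) auto
  finally show ?thesis using Cbound by simp
qed

lemma N4: assumes n: "n \<in> blk L" shows "0 < eps n" "eps n \<le> 1/2"
proof -
  have n4: "real n \<ge> 4" using blk_ge4[OF n] by simp
  have lnn: "ln (real n) \<ge> ln 4" using n4 by simp
  have "ln (4::real) > 1"
  proof -
    have "exp 1 < (4::real)" using exp_le by linarith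
    then have "ln (exp 1) < ln (4::real)" by (subst ln_less_cancel_iff) auto
    then show ?thesis by simp
  qed
  then have "ln (real n) \<ge> 1" using lnn by linarith
  then have nl: "real n * ln (real n) \<ge> 1 * 1" using n4 by (intro mult_mono) auto
  have C1': "C \<le> 1" 
  proof -
    have "ln (2*real D) \<ge> ln 4" using D by simp
    then have "768 * ln (2*real D) \<ge> 1" using \<open>ln 4 > 1\<close> by linarith
    then show ?thesis by (simp add: C_def)
  qed
  show "0 < eps n" using Cpos nl by (simp add: eps_def)
  have "eps n \<le> C" using Cpos nl by (simp add: eps_def field_simps)
  moreover have "C \<le> 1/768"
  proof -
    have "ln (2*real D) \<ge> ln 4" using D by simp
    then have "ln (2*real D) \<ge> 1" using \<open>ln 4 > 1\<close> by linarith
    then show ?thesis by (simp add: C_def field_simps)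
  qed
  ultimately show "eps n \<le> 1/2" by simp
qed

end

context setting begin

definition "good L y = (\<forall>n\<in>blk L. \<forall>x. real y / real (M L) \<le> x \<and> x < (real y + 1)/real (M L) \<longrightarrow> dist_int (x * t n) > eps n)"
definition "badc k i = {r. r < Rs k \<and> \<not> good (Suc k) (i * Rs k + r)}"
definition "nice k i = (card (badc k i) \<le> Rs k div 8)"

primrec alive :: "nat \<Rightarrow> nat \<Rightarrow> bool" where
  "alive 0 y = nice 0 y"
| "alive (Suc k) y = (alive k (y div Rs k) \<and> good (Suc k) y \<and> nice (Suc k) y)"

definition "Q k = Rs k div 8"
definition "EA k i = {r. r < Rs k \<and> even r \<and> good (Suc k) (i * Rs k + r) \<and> nice (Suc k) (i * Rs k + r)}"
definition "S k i = (SOME T. T \<subseteq> EA k i \<and> card T = Q k)"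

primrec sel :: "nat \<Rightarrow> nat \<Rightarrow> bool" where
  "sel 0 y = (y = 0)"
| "sel (Suc k) y = (sel k (y div Rs k) \<and> y mod Rs k \<in> S k (y div Rs k))"

lemma M2: "M (Suc (Suc k)) = M k * (Rs k * Rs (Suc k))"
  by (simp add: M_Suc mult.assoc)

lemma bad_grand:
  "real (card {y \<in> {i*(Rs k * Rs (Suc k))..<(i+1)*(Rs k * Rs (Suc k))}. \<not> good (Suc (Suc k)) y})
     \<le> real (Rs k * Rs (Suc k)) / 64"
proof -
  define R2 where "R2 = Rs k * Rs (Suc k)"
  define L where "L = Suc (Suc k)"
  have R2pos: "R2 \<ge> 1" unfolding R2_def using Rs_ge[of k] Rs_ge[of "Suc k"] by (simp add: Suc_le_eq)
  define B where "B = (\<lambda>n. {y \<in> {i*R2..<(i+1)*R2}. \<exists>x. real y/(M k*R2) \<le> x \<and> x < (real y+1)/(M k*R2) \<and> dist_int (x*t n) \<le> eps n})"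
  have sub: "{y \<in> {i*R2..<(i+1)*R2}. \<not> good L y} \<subseteq> (\<Union>n\<in>blk L. B n)"
  proof
    fix y assume y: "y \<in> {y \<in> {i*R2..<(i+1)*R2}. \<not> good L y}"
    then obtain n x where n: "n \<in> blk L" and x: "real y / real (M L) \<le> x" "x < (real y + 1)/real (M L)"
      "\<not> dist_int (x * t n) > eps n"
      unfolding good_def by auto
    have "real (M L) = real (M k) * real R2" unfolding L_def R2_def M2 by simp
    then have "y \<in> B n" using y x unfolding B_def by auto
    then show "y \<in> (\<Union>n\<in>blk L. B n)" using n by blast
  qed
  have finblk: "finite (blk L)" by (simp add: blk_def)
  have cB: "\<And>n. n \<in> blk L \<Longrightarrow> real (card (B n)) \<le> 12 * eps n * R2"
  proof -
    fix n assume n: "n \<in> blk L"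
    have L2: "L - 2 = k" by (simp add: L_def)
    have n1: "n \<ge> 1" using blk_ge4[OF n] by simp
    show "real (card (B n)) \<le> 12 * eps n * R2" unfolding B_def
    proof (rule bad_count)
      show "t n > 0" by (rule t_pos[OF n1])
      show "0 < eps n" "eps n \<le> 1/2" using N4[OF n] by auto
      show "M k \<ge> 1" by (rule M_pos)
      show "R2 \<ge> 1" by (rule R2pos)
      show "real (M k) \<le> t n" using N1[OF n] L2 by simp
      have "t n \<le> eps n * M L" by (rule N2[OF n])
      moreover have "real (M L) = real (M k) * real R2" unfolding L_def R2_def M2 by simp
      ultimately show "t n \<le> eps n * real (M k * R2)" by simp
    qed
  qed
  have finB: "\<And>n. finite (B n)" unfolding B_def by simp
  have "real (card {y \<in> {i*R2..<(i+1)*R2}. \<not> good L y}) \<le> real (card (\<Union>n\<in>blk L. B n))"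
    using card_mono[OF _ sub] finblk finB by simp
  also have "\<dots> \<le> real (\<Sum>n\<in>blk L. card (B n))" using card_UN_le[OF finblk, of B] by linarith
  also have "\<dots> = (\<Sum>n\<in>blk L. real (card (B n)))" by simp
  also have "\<dots> \<le> (\<Sum>n\<in>blk L. 12 * eps n * R2)" by (rule sum_mono) (rule cB)
  also have "\<dots> = 12 * R2 * (\<Sum>n\<in>blk L. eps n)" by (simp add: sum_distrib_left mult_ac)
  also have "\<dots> \<le> 12 * R2 * (1/768)" using N3[of L] by (intro mult_left_mono) (auto simp: L_def)
  also have "\<dots> = real R2 / 64" by simp
  finally show ?thesis unfolding R2_def L_def .
qed

lemma Rs8: "Rs k = 8 * (Rs k div 8)" using Rs_dvd[of k] by simp

lemma few_not_nice:
  "card {r. r < Rs k \<and> \<not> nice (Suc k) (i * Rs k + r)} \<le> Rs k div 8"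
proof -
  define R where "R = Rs k"
  define R' where "R' = Rs (Suc k)"
  define T where "T = {r. r < R \<and> \<not> nice (Suc k) (i * R + r)}"
  define f where "f = (\<lambda>r r'. (i*R + r)*R' + r')"
  have finT: "finite T" unfolding T_def by simp
  have R'pos: "R' > 0" unfolding R'_def using Rs_ge[of "Suc k"] by simp
  have disj: "\<forall>r\<in>T. \<forall>s\<in>T. r \<noteq> s \<longrightarrow> f r ` badc (Suc k) (i*R+r) \<inter> f s ` badc (Suc k) (i*R+s) = {}"
  proof (intro ballI impI)
    fix r s :: nat assume "r \<noteq> s"
    show "f r ` badc (Suc k) (i*R+r) \<inter> f s ` badc (Suc k) (i*R+s) = {}"
    proof (rule ccontr)
      assume "f r ` badc (Suc k) (i*R+r) \<inter> f s ` badc (Suc k) (i*R+s) \<noteq> {}"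
      then obtain u v where u: "u < R'" and v: "v < R'" and eq: "(i*R + r)*R' + u = (i*R + s)*R' + v"
        unfolding f_def badc_def R'_def by auto
      have "((i*R + r)*R' + u) div R' = i*R + r" using u R'pos by simp
      moreover have "((i*R + s)*R' + v) div R' = i*R + s" using v R'pos by simp
      ultimately show False using eq \<open>r \<noteq> s\<close> by simp
    qed
  qed
  have finbad: "\<forall>r\<in>T. finite (f r ` badc (Suc k) (i*R+r))" unfolding badc_def by simp
  have injf: "\<And>r. inj_on (f r) (badc (Suc k) (i*R+r))" unfolding f_def inj_on_def by simp
  have sub: "(\<Union>r\<in>T. f r ` badc (Suc k) (i*R+r)) \<subseteq> {y \<in> {i*(R*R')..<(i+1)*(R*R')}. \<not> good (Suc (Suc k)) y}"
  proof
    fix y assume "y \<in> (\<Union>r\<in>T. f r ` badc (Suc k) (i*R+r))"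
    then obtain r u where r: "r < R" and u: "u < R'" and ng: "\<not> good (Suc (Suc k)) ((i*R + r)*R' + u)"
      and y: "y = (i*R + r)*R' + u"
      unfolding f_def badc_def T_def R'_def by auto
    have "i*(R*R') \<le> y" unfolding y by (simp add: algebra_simps)
    moreover have "y < (i+1)*(R*R')"
    proof -
      have "y < (i*R + r + 1)*R'" unfolding y using u by (simp add: algebra_simps)
      also have "\<dots> \<le> (i*R + R)*R'" using r by (intro mult_le_mono1) simp
      also have "\<dots> = (i+1)*(R*R')" by (simp add: algebra_simps)
      finally show ?thesis .
    qed
    ultimately show "y \<in> {y \<in> {i*(R*R')..<(i+1)*(R*R')}. \<not> good (Suc (Suc k)) y}" using ng y by simp
  qed
  have "(\<Sum>r\<in>T. card (badc (Suc k) (i*R+r))) = (\<Sum>r\<in>T. card (f r ` badc (Suc k) (i*R+r)))"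
    using card_image[OF injf] by simp
  also have "\<dots> = card (\<Union>r\<in>T. f r ` badc (Suc k) (i*R+r))"
    using card_UN_disjoint[OF finT finbad disj] by simp
  also have "\<dots> \<le> card {y \<in> {i*(R*R')..<(i+1)*(R*R')}. \<not> good (Suc (Suc k)) y}"
    by (rule card_mono[OF _ sub]) simp
  finally have s1: "real (\<Sum>r\<in>T. card (badc (Suc k) (i*R+r))) \<le> real (R*R') / 64"
    using bad_grand[of i k] unfolding R_def R'_def by linarith
  have "\<forall>r\<in>T. card (badc (Suc k) (i*R+r)) \<ge> R' div 8 + 1"
    unfolding T_def nice_def R'_def by auto
  then have "(\<Sum>r\<in>T. R' div 8 + 1) \<le> (\<Sum>r\<in>T. card (badc (Suc k) (i*R+r)))"
    by (intro sum_mono) auto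
  then have "card T * (R' div 8 + 1) \<le> (\<Sum>r\<in>T. card (badc (Suc k) (i*R+r)))" by simp
  then have "real (card T) * (real R' / 8) \<le> real (R*R') / 64"
  proof -
    assume h: "card T * (R' div 8 + 1) \<le> (\<Sum>r\<in>T. card (badc (Suc k) (i*R+r)))"
    have h8: "real R' = 8 * real (R' div 8)" using arg_cong[OF Rs8[of "Suc k"], of real] unfolding R'_def by simp
    then have "real R' / 8 = real (R' div 8)" by simp
    then have "real (card T) * (real R' / 8) \<le> real (card T * (R' div 8 + 1))" by simp
    then show ?thesis using h s1 by linarith
  qed
  then have "real (card T) \<le> real R / 8" using R'pos by (simp add: field_simps)
  moreover have "real R / 8 = real (R div 8)"
  proof -
    have h8: "real R = 8 * real (R div 8)" using arg_cong[OF Rs8[of k], of real] unfolding R_def by simp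
    then show ?thesis by simp
  qed
  ultimately have "card T \<le> R div 8" by linarith
  then show ?thesis unfolding T_def R_def .
qed

end

context setting begin

lemma card_evens: assumes "even R" shows "card {r::nat. r < R \<and> even r} = R div 2"
proof -
  have "{r::nat. r < R \<and> even r} = (\<lambda>j. 2*j) ` {..<R div 2}"
  proof
    show "{r. r < R \<and> even r} \<subseteq> (\<lambda>j. 2 * j) ` {..<R div 2}"
    proof
      fix r assume r: "r \<in> {r. r < R \<and> even r}"
      then obtain j where j: "r = 2*j" by auto
      then have "j < R div 2" using r assms by auto
      then show "r \<in> (\<lambda>j. 2 * j) ` {..<R div 2}" using j by auto
    qed
    show "(\<lambda>j. 2 * j) ` {..<R div 2} \<subseteq> {r. r < R \<and> even r}" using assms by auto
  qed
  moreover have "inj_on (\<lambda>j::nat. 2*j) {..<R div 2}" by (simp add: inj_on_def)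
  ultimately show ?thesis by (simp add: card_image)
qed

lemma card_EA: assumes "nice k i" shows "card (EA k i) \<ge> Q k"
proof -
  define R where "R = Rs k"
  define Ev where "Ev = {r::nat. r < R \<and> even r}"
  define T where "T = {r. r < R \<and> \<not> nice (Suc k) (i * R + r)}"
  have R8: "R = 8 * (R div 8)" unfolding R_def by (rule Rs8)
  have evR: "even R" by (subst R8) simp
  have cEv: "card Ev = R div 2" unfolding Ev_def by (rule card_evens[OF evR])
  have cB: "card (badc k i) \<le> R div 8" using assms unfolding nice_def R_def .
  have cT: "card T \<le> R div 8" using few_not_nice[of k i] unfolding T_def R_def .
  have eq: "EA k i = Ev - badc k i - T" unfolding EA_def Ev_def badc_def T_def R_def by auto
  have fB: "finite (badc k i)" unfolding badc_def by simp
  have fT: "finite T" unfolding T_def by simp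
  have "card Ev - card (badc k i) \<le> card (Ev - badc k i)" by (rule diff_card_le_card_Diff[OF fB])
  moreover have "card (Ev - badc k i) - card T \<le> card (Ev - badc k i - T)" by (rule diff_card_le_card_Diff[OF fT])
  ultimately have "card Ev - card (badc k i) - card T \<le> card (EA k i)" unfolding eq by linarith
  moreover have "R div 2 = 4 * (R div 8)" using R8 by linarith
  ultimately have "R div 8 \<le> card (EA k i)" using cEv cB cT by linarith
  then show ?thesis unfolding Q_def R_def .
qed

lemma S_props: assumes "nice k i" shows "S k i \<subseteq> EA k i" "card (S k i) = Q k" "finite (S k i)"
proof -
  obtain T where T: "T \<subseteq> EA k i" "card T = Q k" "finite T"
    using obtain_subset_with_card_n[OF card_EA[OF assms]] by blast
  have "\<exists>T. T \<subseteq> EA k i \<and> card T = Q k" using T by blast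
  then have h: "S k i \<subseteq> EA k i \<and> card (S k i) = Q k" unfolding S_def by (rule someI_ex)
  then show "S k i \<subseteq> EA k i" "card (S k i) = Q k" by auto
  have "finite (EA k i)" unfolding EA_def by simp
  then show "finite (S k i)" using h finite_subset by blast
qed

lemma alive_nice: "alive k y \<Longrightarrow> nice k y" by (cases k) auto

lemma sel_alive: "sel k y \<Longrightarrow> alive k y"
proof (induction k arbitrary: y)
  case 0
  have "badc 0 0 = {}" unfolding badc_def good_def by (simp add: blk_def)
  then show ?case using 0 by (simp add: nice_def)
next
  case (Suc k)
  define p where "p = y div Rs k"
  have sp: "sel k p" and mem: "y mod Rs k \<in> S k p" using Suc.prems by (auto simp: p_def)
  have ap: "alive k p" using Suc.IH[OF sp] .
  have "y mod Rs k \<in> EA k p" using S_props(1)[OF alive_nice[OF ap]] mem by blast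
  moreover have "p * Rs k + y mod Rs k = y" unfolding p_def by simp
  ultimately have "good (Suc k) y" "nice (Suc k) y" unfolding EA_def by auto
  then show ?case using ap by (simp add: p_def)
qed

lemma sel_S: assumes "sel k i" shows "S k i \<subseteq> EA k i" "card (S k i) = Q k" "finite (S k i)"
  using S_props[OF alive_nice[OF sel_alive[OF assms]]] by auto

lemma sel_good: "sel k y \<Longrightarrow> good k y"
proof -
  assume "sel k y"
  then have "alive k y" by (rule sel_alive)
  then show "good k y"
  proof (cases k)
    case 0 then show ?thesis unfolding good_def by (simp add: blk_def)
  next
    case (Suc k') then show ?thesis using \<open>alive k y\<close> by simp
  qed
qed

lemma EA_sub: "EA k i \<subseteq> {r. r < Rs k \<and> even r}" unfolding EA_def by auto

end

lemma nat_floor_char: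
  fixes z :: real and y :: nat assumes "real y \<le> z" "z < real y + 1"
  shows "nat \<lfloor>z\<rfloor> = y"
proof -
  have "\<lfloor>z\<rfloor> = int y" using assms by (simp add: floor_eq_iff)
  then show ?thesis by simp
qed

lemma nat_floor_bounds:
  fixes z :: real assumes "z \<ge> 0"
  shows "real (nat \<lfloor>z\<rfloor>) \<le> z" "z < real (nat \<lfloor>z\<rfloor>) + 1"
  using assms by (simp_all add: of_nat_floor)

lemma floor_div_nat:
  fixes z :: real and R :: nat assumes z: "z \<ge> 0" and R: "R > 0"
  shows "nat \<lfloor>z * real R\<rfloor> div R = nat \<lfloor>z\<rfloor>"
proof -
  define q where "q = nat \<lfloor>z\<rfloor>"
  have q1: "real q \<le> z" and q2: "z < real q + 1" unfolding q_def using nat_floor_bounds[OF z] by auto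
  have zr: "z * real R \<ge> 0" using z by simp
  have "real (R*q) \<le> z * real R" using q1 R by (simp add: mult.commute mult_right_mono)
  then have h1: "R*q \<le> nat \<lfloor>z * real R\<rfloor>"
    by (metis le_nat_floor of_nat_floor zr le_floor_iff floor_of_nat)
  have "z * real R < (real q + 1) * real R" using q2 R by (simp add: mult_strict_right_mono)
  then have "real (nat \<lfloor>z * real R\<rfloor>) < real (R * Suc q)" using nat_floor_bounds(1)[OF zr]
    by (simp add: algebra_simps)
  then have h2: "nat \<lfloor>z * real R\<rfloor> < R * Suc q" by linarith
  show ?thesis unfolding q_def[symmetric] by (rule div_nat_eqI[OF h1 h2])
qed

context setting begin

definition "cell k x = nat \<lfloor>x * real (M k)\<rfloor>"
definition "KK = {x::real. 0 \<le> x \<and> x < 1 \<and> (\<forall>k. sel k (cell k x))}"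
definition "AA = (\<Inter>n\<in>{N 1..}. {\<xi>::real. dist_int (\<xi> * t n) > C / (real n * ln (real n))})"

lemma cell_bounds: assumes "x \<ge> 0"
  shows "real (cell k x) / real (M k) \<le> x" "x < (real (cell k x) + 1) / real (M k)"
proof -
  have Mp: "real (M k) > 0" using M_pos[of k] by simp
  have z: "x * real (M k) \<ge> 0" using assms by simp
  show "real (cell k x) / real (M k) \<le> x" using nat_floor_bounds(1)[OF z] Mp unfolding cell_def
    by (simp add: field_simps)
  show "x < (real (cell k x) + 1) / real (M k)" using nat_floor_bounds(2)[OF z] Mp unfolding cell_def
    by (simp add: field_simps)
qed

lemma cell_Suc_div: "x \<ge> 0 \<Longrightarrow> cell (Suc k) x div Rs k = cell k x"
proof -
  assume x: "x \<ge> 0"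
  have e: "x * real (M (Suc k)) = (x * real (M k)) * real (Rs k)" by (simp add: M_Suc)
  have "Rs k > 0" using Rs_ge[of k] by simp
  then show ?thesis unfolding cell_def e using floor_div_nat[of "x * real (M k)" "Rs k"] x by simp
qed

lemma cell_0: "0 \<le> x \<Longrightarrow> x < 1 \<Longrightarrow> cell 0 x = 0"
  unfolding cell_def by (simp add: M_def e_def)

lemma N_mono: "N j \<le> N (Suc j)"
  unfolding N_def using D by (intro power_increasing) auto

lemma N_mono': "i \<le> j \<Longrightarrow> N i \<le> N j"
  by (induction j rule: dec_induct) (auto intro: le_trans N_mono)

lemma N_big: "n < N n"
proof -
  have "n < 2^n" by (rule less_exp)
  also have "(2::nat)^n \<le> 2^(a*D^n)"
  proof (rule power_increasing)
    have "n < 2^n" by (rule less_exp)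
    also have "(2::nat)^n \<le> D^n" using D by (intro power_mono) auto
    also have "D^n \<le> a * D^n" using a2 by simp
    finally show "n \<le> a*D^n" by simp
  qed simp
  finally show ?thesis by (simp add: N_def)
qed

lemma in_some_blk: assumes n: "n \<ge> N 1" shows "\<exists>L. n \<in> blk L"
proof -
  define L where "L = (LEAST j. n < N j)"
  have nL: "n < N L" unfolding L_def by (rule LeastI[of _ n]) (rule N_big)
  have L2: "L \<ge> 2"
  proof (rule ccontr)
    assume "\<not> L \<ge> 2"
    then have "L \<le> 1" by simp
    then have "N L \<le> N 1" by (rule N_mono')
    then show False using nL n by simp
  qed
  have "\<not> n < N (L-1)"
  proof
    assume "n < N (L-1)"
    then have "L \<le> L - 1" unfolding L_def by (rule Least_le)
    then show False using L2 by simp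
  qed
  then have "n \<in> blk L" using nL L2 unfolding blk_def by auto
  then show ?thesis by blast
qed

lemma KK_sub_AA: "KK \<subseteq> AA"
proof
  fix x assume x: "x \<in> KK"
  then have x0: "x \<ge> 0" and sx: "\<And>k. sel k (cell k x)" unfolding KK_def by auto
  show "x \<in> AA" unfolding AA_def
  proof (intro InterI, clarsimp)
    fix n assume n: "N (Suc 0) \<le> n"
    obtain L where nL: "n \<in> blk L" using in_some_blk n by auto
    have "good L (cell L x)" using sel_good sx by blast
    then have "dist_int (x * t n) > eps n" unfolding good_def using nL cell_bounds[OF x0, of L] by blast
    then show "C / (real n * ln (real n)) < dist_int (x * t n)" by (simp add: eps_def)
  qed
qed

end

lemma card_less_mono:
  fixes S :: "nat set" assumes "finite S" "a \<le> b"
  shows "card {r\<in>S. r < a} \<le> card {r\<in>S. r < b}"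
    and "card {r\<in>S. r < b} \<le> card {r\<in>S. r < a} + (b - a)"
proof -
  show "card {r\<in>S. r < a} \<le> card {r\<in>S. r < b}" using assms by (intro card_mono) auto
  have "{r\<in>S. r < b} \<subseteq> {r\<in>S. r < a} \<union> {a..<b}" by auto
  then have "card {r\<in>S. r < b} \<le> card ({r\<in>S. r < a} \<union> {a..<b})" using assms by (intro card_mono) auto
  also have "\<dots> \<le> card {r\<in>S. r < a} + card {a..<b}" by (rule card_Un_le)
  finally show "card {r\<in>S. r < b} \<le> card {r\<in>S. r < a} + (b - a)" by simp
qed

lemma card_less_diff:
  fixes S :: "nat set" assumes "finite S"
  shows "\<bar>real (card {r\<in>S. r < a}) - real (card {r\<in>S. r < b})\<bar> \<le> \<bar>real a - real b\<bar>"
proof (cases "a \<le> b")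
  case True
  from card_less_mono[OF assms True] show ?thesis using True by (simp add: of_nat_diff)
next
  case False
  then have "b \<le> a" by simp
  from card_less_mono[OF assms this] show ?thesis using \<open>b \<le> a\<close> by (simp add: of_nat_diff)
qed

context setting begin

definition "P k = (\<Prod>m<k. Q m)"
definition "digit m x = card {r \<in> S m (cell m x). r < cell (Suc m) x mod Rs m}"
definition "fterm x m = real (digit m x) / real (P (Suc m))"
definition "phi x = (\<Sum>m. fterm x m)"

lemma Q_ge: "Q m \<ge> 32" using Rs_ge[of m] unfolding Q_def by linarith
lemma P_Suc: "P (Suc k) = P k * Q k" by (simp add: P_def)
lemma P_pos: "P k \<ge> 1"
proof (induction k)
  case 0 then show ?case by (simp add: P_def)
next
  case (Suc k)
  have "Q k \<ge> 1" using Q_ge[of k] by simp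
  then have "1 * 1 \<le> P k * Q k" using Suc by (intro mult_le_mono)
  then show ?case by (simp add: P_Suc)
qed

lemma P_ge1: "real (P k) \<ge> 1" using P_pos[of k] by simp

lemma M_P: "real (M k) = 8^k * real (P k)"
proof (induction k)
  case 0 then show ?case by (simp add: M_def e_def P_def)
next
  case (Suc k)
  have "real (M (Suc k)) = real (M k) * real (Rs k)" by (simp add: M_Suc)
  also have "real (Rs k) = 8 * real (Q k)" using arg_cong[OF Rs8[of k], of real] by (simp add: Q_def)
  finally show ?case using Suc by (simp add: P_Suc)
qed

lemma P_geom: "real (P (j + k)) \<ge> 2^j * real (P k)"
proof (induction j)
  case 0 then show ?case by simp
next
  case (Suc j)
  have "real (P (Suc j + k)) = real (P (j+k)) * real (Q (j+k))" by (simp add: P_Suc)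
  also have "\<dots> \<ge> real (P (j+k)) * 2" using Q_ge[of "j+k"] by (intro mult_left_mono) auto
  finally show ?case using Suc by simp
qed

lemma digit_lt: assumes x: "x \<in> KK" shows "digit m x < Q m"
proof -
  have x0: "x \<ge> 0" and sx: "\<And>k. sel k (cell k x)" using x unfolding KK_def by auto
  define p where "p = cell m x"
  define pos where "pos = cell (Suc m) x mod Rs m"
  have "sel (Suc m) (cell (Suc m) x)" by (rule sx)
  then have pos: "pos \<in> S m p" unfolding pos_def p_def using cell_Suc_div[OF x0, of m] by simp
  have sp: "sel m p" unfolding p_def by (rule sx)
  have fin: "finite (S m p)" by (rule sel_S(3)[OF sp])
  have "{r \<in> S m p. r < pos} \<subset> S m p" using pos by auto
  then have "card {r \<in> S m p. r < pos} < card (S m p)" by (rule psubset_card_mono[OF fin])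
  then show ?thesis using sel_S(2)[OF sp] unfolding digit_def p_def pos_def by simp
qed

lemma fterm_bounds: assumes x: "x \<in> KK" shows "0 \<le> fterm x m" "fterm x m \<le> 1 / real (P m)"
proof -
  show "0 \<le> fterm x m" unfolding fterm_def by simp
  have "real (digit m x) \<le> real (Q m)" using digit_lt[OF x, of m] by simp
  then have "fterm x m \<le> real (Q m) / real (P (Suc m))" unfolding fterm_def
    by (intro divide_right_mono) auto
  also have "\<dots> = 1 / real (P m)" using Q_ge[of m] by (simp add: P_Suc)
  finally show "fterm x m \<le> 1 / real (P m)" .
qed

lemma fterm_geom: assumes x: "x \<in> KK" shows "fterm x (j + k) \<le> (1/2)^j / real (P k)"
proof -
  have "fterm x (j + k) \<le> 1 / real (P (j+k))" by (rule fterm_bounds(2)[OF x])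
  also have "\<dots> \<le> 1 / (2^j * real (P k))" using P_geom[of j k] P_ge1[of k] P_ge1[of "j+k"]
    by (intro divide_left_mono) auto
  also have "\<dots> = (1/2)^j / real (P k)" by (simp add: power_one_over)
  finally show ?thesis .
qed

lemma fterm_summable: assumes x: "x \<in> KK" shows "summable (\<lambda>j. fterm x (j + k))"
proof (rule summable_comparison_test)
  show "\<exists>N. \<forall>n\<ge>N. norm (fterm x (n + k)) \<le> (1/2)^n / real (P k)"
    using fterm_geom[OF x] fterm_bounds(1)[OF x] by auto
  show "summable (\<lambda>n. (1/2::real)^n / real (P k))"
    by (intro summable_divide summable_geometric) simp
qed

lemma tail_bounds: assumes x: "x \<in> KK"
  shows "0 \<le> (\<Sum>j. fterm x (j + k))" "(\<Sum>j. fterm x (j + k)) \<le> 2 / real (P k)"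
proof -
  show "0 \<le> (\<Sum>j. fterm x (j + k))"
    by (rule suminf_nonneg[OF fterm_summable[OF x]]) (use fterm_bounds(1)[OF x] in auto)
  have sg: "summable (\<lambda>n. (1/2::real)^n / real (P k))"
    by (intro summable_divide summable_geometric) simp
  have "(\<Sum>j. fterm x (j + k)) \<le> (\<Sum>j. (1/2::real)^j / real (P k))"
    by (rule suminf_le[OF _ fterm_summable[OF x] sg]) (use fterm_geom[OF x] in auto)
  also have "\<dots> = (\<Sum>j. (1/2::real)^j) / real (P k)"
    by (rule suminf_divide) (simp add: summable_geometric)
  also have "\<dots> = 2 / real (P k)" using suminf_geometric[of "1/2::real"] by simp
  finally show "(\<Sum>j. fterm x (j + k)) \<le> 2 / real (P k)" .
qed

lemma phi_split: assumes x: "x \<in> KK"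
  shows "phi x = (\<Sum>j. fterm x (j + k)) + (\<Sum>i<k. fterm x i)"
proof -
  have "summable (fterm x)" using fterm_summable[OF x, of 0] by simp
  then show ?thesis unfolding phi_def by (rule suminf_split_initial_segment)
qed

lemma phi_diff:
  assumes x: "x \<in> KK" and y: "y \<in> KK" and same: "\<forall>j\<le>k. cell j x = cell j y"
  shows "\<bar>phi x - phi y\<bar> \<le> (\<bar>real (cell (Suc k) x) - real (cell (Suc k) y)\<bar> + 2) / real (P (Suc k))"
proof -
  have x0: "x \<ge> 0" and y0: "y \<ge> 0" using x y unfolding KK_def by auto
  have eqi: "\<And>i. i < k \<Longrightarrow> fterm x i = fterm y i"
    unfolding fterm_def digit_def using same by (simp add: Suc_le_eq)
  have sumeq: "(\<Sum>i<k. fterm x i) = (\<Sum>i<k. fterm y i)" using eqi by (intro sum.cong) auto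
  define p where "p = cell k x"
  have py: "cell k y = p" unfolding p_def using same by simp
  have sx: "sel k p" using x unfolding KK_def p_def by auto
  have fin: "finite (S k p)" by (rule sel_S(3)[OF sx])
  define px where "px = cell (Suc k) x mod Rs k"
  define py' where "py' = cell (Suc k) y mod Rs k"
  have cx: "cell (Suc k) x = p * Rs k + px" unfolding px_def p_def using cell_Suc_div[OF x0, of k]
    by (metis div_mult_mod_eq mult.commute)
  have cy: "cell (Suc k) y = p * Rs k + py'" unfolding py'_def using cell_Suc_div[OF y0, of k] py
    by (metis div_mult_mod_eq mult.commute)
  have "\<bar>real (digit k x) - real (digit k y)\<bar> \<le> \<bar>real px - real py'\<bar>"
    unfolding digit_def using card_less_diff[OF fin, of px py'] py unfolding p_def px_def py'_def by simp
  also have "\<bar>real px - real py'\<bar> = \<bar>real (cell (Suc k) x) - real (cell (Suc k) y)\<bar>" using cx cy by simp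
  finally have dk: "\<bar>real (digit k x) - real (digit k y)\<bar> \<le> \<bar>real (cell (Suc k) x) - real (cell (Suc k) y)\<bar>" .
  have Pp: "real (P (Suc k)) > 0" using P_ge1[of "Suc k"] by simp
  have fk: "\<bar>fterm x k - fterm y k\<bar> \<le> \<bar>real (cell (Suc k) x) - real (cell (Suc k) y)\<bar> / real (P (Suc k))"
  proof -
    have "fterm x k - fterm y k = (real (digit k x) - real (digit k y)) / real (P (Suc k))"
      unfolding fterm_def by (simp add: diff_divide_distrib)
    then have "\<bar>fterm x k - fterm y k\<bar> = \<bar>real (digit k x) - real (digit k y)\<bar> / real (P (Suc k))"
      using Pp by simp
    then show ?thesis using dk Pp by (simp add: divide_right_mono)
  qed
  have tx: "0 \<le> (\<Sum>j. fterm x (j + Suc k))" "(\<Sum>j. fterm x (j + Suc k)) \<le> 2 / real (P (Suc k))"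
    using tail_bounds(1)[OF x, of "Suc k"] tail_bounds(2)[OF x, of "Suc k"] by auto
  have ty: "0 \<le> (\<Sum>j. fterm y (j + Suc k))" "(\<Sum>j. fterm y (j + Suc k)) \<le> 2 / real (P (Suc k))"
    using tail_bounds(1)[OF y, of "Suc k"] tail_bounds(2)[OF y, of "Suc k"] by auto
  have "phi x - phi y = ((\<Sum>j. fterm x (j + Suc k)) - (\<Sum>j. fterm y (j + Suc k))) + (fterm x k - fterm y k)"
    using phi_split[OF x, of "Suc k"] phi_split[OF y, of "Suc k"] sumeq by simp
  then have "\<bar>phi x - phi y\<bar> \<le> 2 / real (P (Suc k)) + \<bar>real (cell (Suc k) x) - real (cell (Suc k) y)\<bar> / real (P (Suc k))"
    using tx ty fk by linarith
  then show ?thesis by (simp add: add_divide_distrib)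
qed

end

lemma floor_diff_lt:
  fixes a b :: real assumes "a \<ge> 0" "b \<ge> 0"
  shows "\<bar>real (nat \<lfloor>a\<rfloor>) - real (nat \<lfloor>b\<rfloor>)\<bar> < \<bar>a - b\<bar> + 1"
  using nat_floor_bounds[OF assms(1)] nat_floor_bounds[OF assms(2)] by linarith

context setting begin

lemma e_mono': "i \<le> j \<Longrightarrow> e i \<le> e j"
  by (induction j rule: dec_induct) (auto intro: le_trans e_mono)

lemma M_mono: "i \<le> j \<Longrightarrow> M i \<le> M j"
  unfolding M_def by (intro power_increasing e_mono') auto

lemma e_ge: "real (e k) \<ge> 8 * (2^k - 1)"
proof -
  have "(2::nat)^k \<le> D^k" using D by (intro power_mono) auto
  moreover have "E * a \<ge> 4 * 2" using E4 a2 by (intro mult_le_mono)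
  ultimately have "8 * (2^k - 1) \<le> E*a*(D^k - 1)" by (intro mult_le_mono) auto
  then have "real (8 * (2^k - 1)) \<le> real (e k)" unfolding e_def by linarith
  moreover have "real (8 * ((2::nat)^k - 1)) = 8 * (2^k - 1)" by (simp add: of_nat_diff)
  ultimately show ?thesis by simp
qed

lemma M_ge: "real (M k) > real k"
proof -
  have "k < 2^k" by (rule less_exp)
  also have "(2::nat)^k \<le> 2^(e k)"
  proof (rule power_increasing)
    have "Suc k \<le> (2::nat)^k" by (rule Suc_leI[OF less_exp])
    then have "real (Suc k) \<le> real ((2::nat)^k)" by (simp only: of_nat_le_iff)
    then have "real k + 1 \<le> 2^k" by simp
    then have "real k \<le> 8 * (2^k - 1)" by simp
    then show "k \<le> e k" using e_ge[of k] by linarith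
  qed simp
  finally show ?thesis by (simp add: M_def)
qed

lemma same_cells:
  assumes x: "x \<in> KK" and y: "y \<in> KK" and d: "\<bar>x - y\<bar> < 1 / real (M k)"
  shows "j \<le> k \<Longrightarrow> cell j x = cell j y"
proof (induction j)
  case 0
  then show ?case using x y cell_0 unfolding KK_def by auto
next
  case (Suc j)
  have x0: "x \<ge> 0" and y0: "y \<ge> 0" using x y unfolding KK_def by auto
  have IH: "cell j x = cell j y" using Suc by simp
  define p where "p = cell j x"
  define px where "px = cell (Suc j) x mod Rs j"
  define py where "py = cell (Suc j) y mod Rs j"
  have cx: "cell (Suc j) x = p * Rs j + px" unfolding px_def p_def using cell_Suc_div[OF x0, of j]
    by (metis div_mult_mod_eq mult.commute)
  have cy: "cell (Suc j) y = p * Rs j + py" unfolding py_def p_def using cell_Suc_div[OF y0, of j] IH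
    by (metis div_mult_mod_eq mult.commute)
  have sxs: "sel (Suc j) (cell (Suc j) x)" "sel (Suc j) (cell (Suc j) y)" using x y unfolding KK_def by auto
  have pxS: "px \<in> S j p" using sxs(1) cell_Suc_div[OF x0, of j] unfolding px_def p_def by simp
  have pyS: "py \<in> S j p" using sxs(2) cell_Suc_div[OF y0, of j] IH unfolding py_def p_def by simp
  have sp: "sel j p" using x unfolding KK_def p_def by auto
  have ev: "even px" "even py" using sel_S(1)[OF sp] EA_sub[of j p] pxS pyS by auto
  show ?case
  proof (rule ccontr)
    assume ne: "cell (Suc j) x \<noteq> cell (Suc j) y"
    then have "px \<noteq> py" using cx cy by auto
    then have "px + 2 \<le> py \<or> py + 2 \<le> px" using ev by presburger
    then have "\<bar>real px - real py\<bar> \<ge> 2" by linarith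
    then have big: "\<bar>real (cell (Suc j) x) - real (cell (Suc j) y)\<bar> \<ge> 2" using cx cy by simp
    have Mj: "real (M (Suc j)) \<le> real (M k)" using M_mono[of "Suc j" k] Suc.prems by simp
    have Mp: "real (M (Suc j)) > 0" using M_pos[of "Suc j"] by simp
    have "\<bar>x * real (M (Suc j)) - y * real (M (Suc j))\<bar> = \<bar>x - y\<bar> * real (M (Suc j))"
      by (simp add: left_diff_distrib[symmetric] abs_mult)
    also have "\<dots> \<le> \<bar>x - y\<bar> * real (M k)" using Mj by (intro mult_left_mono) auto
    also have "\<dots> < 1" using d M_pos[of k] by (simp add: field_simps)
    finally have "\<bar>x * real (M (Suc j)) - y * real (M (Suc j))\<bar> < 1" .
    moreover have "\<bar>real (cell (Suc j) x) - real (cell (Suc j) y)\<bar> < \<bar>x * real (M (Suc j)) - y * real (M (Suc j))\<bar> + 1"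
      unfolding cell_def by (rule floor_diff_lt) (use x0 y0 in auto)
    ultimately show False using big by linarith
  qed
qed

end

context setting begin

lemma k0_exists: assumes s: "0 < s" "s < 1"
  shows "\<exists>k0. \<forall>k\<ge>k0. 4 * 8^(Suc k) * (1 / real (M k)) powr (1-s) \<le> 1"
proof -
  have ev: "eventually (\<lambda>k::nat. 3*real k + 5 \<le> 8*(1-s)*(2^k - 1)) sequentially"
    using s by real_asymp
  then obtain k0 where k0: "\<And>k. k \<ge> k0 \<Longrightarrow> 3*real k + 5 \<le> 8*(1-s)*(2^k - 1)"
    unfolding eventually_sequentially by blast
  have "\<forall>k\<ge>k0. 4 * 8^(Suc k) * (1 / real (M k)) powr (1-s) \<le> 1"
  proof (intro allI impI)
    fix k assume "k \<ge> k0"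
    then have h: "3*real k + 5 \<le> 8*(1-s)*(2^k - 1)" by (rule k0)
    have "(1-s) * (8*(2^k - 1)) \<le> (1-s) * real (e k)" by (rule mult_left_mono[OF e_ge]) (use s in simp)
    moreover have "8*(1-s)*(2^k - 1) = (1-s) * (8*(2^k - 1))" by (simp add: algebra_simps)
    ultimately have "8*(1-s)*(2^k - 1) \<le> (1-s) * real (e k)" by linarith
    then have h2: "3*real k + 5 \<le> (1-s) * real (e k)" using h by linarith
    have Mk: "real (M k) = 2 powr real (e k)" by (simp add: M_def powr_realpow)
    have im: "1 / real (M k) = 2 powr (- real (e k))" unfolding Mk by (simp add: powr_minus divide_inverse)
    have "(1 / real (M k)) powr (1-s) = 2 powr (- ((1-s) * real (e k)))"
      unfolding im by (simp add: powr_powr mult.commute)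
    moreover have "4 * 8^(Suc k) = (2::real) powr (3*real k + 5)"
    proof -
      have "(2::real) powr (3*real k + 5) = 2 powr (real (3*k+5))" by simp
      also have "\<dots> = 2^(3*k+5)" by (rule powr_realpow) simp
      also have "\<dots> = 4 * 8^(Suc k)" by (simp add: power_add power_mult)
      finally show ?thesis by simp
    qed
    ultimately have "4 * 8^(Suc k) * (1 / real (M k)) powr (1-s) = 2 powr (3*real k + 5 - (1-s) * real (e k))"
      by (simp add: powr_add[symmetric])
    also have "\<dots> \<le> 2 powr 0" using h2 by (intro powr_mono) auto
    finally show "4 * 8^(Suc k) * (1 / real (M k)) powr (1-s) \<le> 1" by simp
  qed
  then show ?thesis by blast
qed

lemma holder:
  assumes s: "0 < s" "s < 1" and k0: "\<forall>k\<ge>k0. 4 * 8^(Suc k) * (1 / real (M k)) powr (1-s) \<le> 1"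
    and x: "x \<in> KK" and y: "y \<in> KK" and d0: "\<bar>x - y\<bar> < 1 / real (M k0)"
  shows "\<bar>phi x - phi y\<bar> \<le> \<bar>x - y\<bar> powr s"
proof (cases "x = y")
  case True then show ?thesis by simp
next
  case False
  define d where "d = \<bar>x - y\<bar>"
  have dpos: "d > 0" using False by (simp add: d_def)
  define J where "J = {j. d < 1 / real (M j)}"
  have Jb: "J \<subseteq> {..nat \<lceil>1/d\<rceil>}"
  proof
    fix j assume "j \<in> J"
    then have "d < 1 / real (M j)" by (simp add: J_def)
    then have "real (M j) < 1/d" using dpos M_pos[of j] by (simp add: field_simps)
    then have "real j < 1/d" using M_ge[of j] by linarith
    then show "j \<in> {..nat \<lceil>1/d\<rceil>}" by (simp add: le_nat_iff le_ceiling_iff less_imp_le)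
  qed
  have finJ: "finite J" using finite_subset[OF Jb] by simp
  have k0J: "k0 \<in> J" using d0 by (simp add: J_def d_def)
  define k where "k = Max J"
  have kJ: "k \<in> J" unfolding k_def using finJ k0J by (intro Max_in) auto
  have kk0: "k \<ge> k0" unfolding k_def using finJ k0J by (intro Max_ge)
  have "Suc k \<notin> J" using Max_ge[OF finJ, of "Suc k"] unfolding k_def[symmetric] by auto
  then have dlo: "d \<ge> 1 / real (M (Suc k))" by (simp add: J_def)
  have dhi: "d < 1 / real (M k)" using kJ by (simp add: J_def)
  have same: "\<forall>j\<le>k. cell j x = cell j y" using same_cells[OF x y] dhi by (simp add: d_def)
  have x0: "x \<ge> 0" and y0: "y \<ge> 0" using x y unfolding KK_def by auto
  have M1p: "real (M (Suc k)) > 0" using M_pos[of "Suc k"] by simp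
  have cd: "\<bar>real (cell (Suc k) x) - real (cell (Suc k) y)\<bar> < d * real (M (Suc k)) + 1"
  proof -
    have "\<bar>real (cell (Suc k) x) - real (cell (Suc k) y)\<bar> < \<bar>x * real (M (Suc k)) - y * real (M (Suc k))\<bar> + 1"
      unfolding cell_def by (rule floor_diff_lt) (use x0 y0 in auto)
    also have "\<bar>x * real (M (Suc k)) - y * real (M (Suc k))\<bar> = d * real (M (Suc k))"
      unfolding d_def by (simp add: left_diff_distrib[symmetric] abs_mult)
    finally show ?thesis .
  qed
  have dM: "d * real (M (Suc k)) \<ge> 1" using dlo M1p by (simp add: field_simps)
  have Pp: "real (P (Suc k)) > 0" using P_ge1[of "Suc k"] by simp
  have "\<bar>phi x - phi y\<bar> \<le> (\<bar>real (cell (Suc k) x) - real (cell (Suc k) y)\<bar> + 2) / real (P (Suc k))"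
    by (rule phi_diff[OF x y same])
  also have "\<dots> \<le> (4 * (d * real (M (Suc k)))) / real (P (Suc k))"
    using cd dM Pp by (intro divide_right_mono) auto
  also have "\<dots> = 4 * 8^(Suc k) * d" using M_P[of "Suc k"] Pp by (simp add: field_simps)
  also have "\<dots> = 4 * 8^(Suc k) * d powr (1-s) * d powr s" using dpos
    by (simp add: powr_add[symmetric])
  also have "\<dots> \<le> 4 * 8^(Suc k) * (1 / real (M k)) powr (1-s) * d powr s"
  proof -
    have "d powr (1-s) \<le> (1 / real (M k)) powr (1-s)" using dhi dpos s by (intro powr_mono2) auto
    then show ?thesis by (intro mult_right_mono mult_left_mono) auto
  qed
  also have "\<dots> \<le> 1 * d powr s" using k0 kk0 by (intro mult_right_mono) auto
  finally show ?thesis by (simp add: d_def)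
qed

end

lemma rank_nth:
  fixes S :: "nat set" assumes fin: "finite S" and d: "d < card S"
  shows "card {r\<in>S. r < sorted_list_of_set S ! d} = d"
proof -
  define xs where "xs = sorted_list_of_set S"
  have sx: "set xs = S" unfolding xs_def using fin by simp
  have lx: "length xs = card S" unfolding xs_def by simp
  have so: "sorted_wrt (<) xs" unfolding xs_def by (rule strict_sorted_list_of_set)
  have di: "distinct xs" unfolding xs_def by simp
  have eq: "{r\<in>S. r < xs ! d} = (\<lambda>i. xs ! i) ` {..<d}"
  proof
    show "{r\<in>S. r < xs ! d} \<subseteq> (\<lambda>i. xs ! i) ` {..<d}"
    proof
      fix r assume r: "r \<in> {r\<in>S. r < xs ! d}"
      then obtain i where i: "i < length xs" "r = xs ! i" using sx by (auto simp: in_set_conv_nth)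
      have "i < d"
      proof (rule ccontr)
        assume "\<not> i < d"
        then have "d \<le> i" by simp
        then have "xs ! d \<le> xs ! i"
          using sorted_wrt_nth_less[OF so, of d i] i(1) by (cases "d = i") auto
        then show False using r i by simp
      qed
      then show "r \<in> (\<lambda>i. xs ! i) ` {..<d}" using i by auto
    qed
    show "(\<lambda>i. xs ! i) ` {..<d} \<subseteq> {r\<in>S. r < xs ! d}"
    proof
      fix r assume "r \<in> (\<lambda>i. xs ! i) ` {..<d}"
      then obtain i where i: "i < d" "r = xs ! i" by auto
      have "xs ! i < xs ! d" using sorted_wrt_nth_less[OF so i(1)] d lx by simp
      moreover have "xs ! i \<in> S" using sx i d lx by auto
      ultimately show "r \<in> {r\<in>S. r < xs ! d}" using i by simp
    qed
  qed
  have "inj_on (\<lambda>i. xs ! i) {..<d}" using di d lx by (auto simp: inj_on_def nth_eq_iff_index_eq)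
  then have "card ((\<lambda>i. xs ! i) ` {..<d}) = d" by (simp add: card_image)
  then show ?thesis using eq unfolding xs_def by simp
qed

context setting begin

definition "Gz z m = nat \<lfloor>z * real (P m)\<rfloor>"
definition "dz z m = Gz z (Suc m) mod Q m"
primrec yz :: "real \<Rightarrow> nat \<Rightarrow> nat" where
  "yz z 0 = 0"
| "yz z (Suc m) = yz z m * Rs m + sorted_list_of_set (S m (yz z m)) ! dz z m"

definition "el z m = sorted_list_of_set (S m (yz z m)) ! dz z m"

lemma yz_Suc': "yz z (Suc m) = yz z m * Rs m + el z m" by (simp add: el_def)

lemma Gz_Suc: assumes z: "z \<ge> 0" shows "Gz z (Suc m) = Gz z m * Q m + dz z m"
proof -
  have e: "z * real (P (Suc m)) = (z * real (P m)) * real (Q m)" by (simp add: P_Suc)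
  have "Q m > 0" using Q_ge[of m] by simp
  then have "Gz z (Suc m) div Q m = Gz z m"
    unfolding Gz_def e using floor_div_nat[of "z * real (P m)" "Q m"] z by simp
  then show ?thesis unfolding dz_def by (metis div_mult_mod_eq)
qed

lemma dz_lt: "dz z m < Q m" unfolding dz_def using Q_ge[of m] by simp

lemma Gz_partial: assumes z: "0 \<le> z" "z < 1"
  shows "(\<Sum>m<n. real (dz z m) / real (P (Suc m))) = real (Gz z n) / real (P n)"
proof (induction n)
  case 0
  have "Gz z 0 = 0" unfolding Gz_def using z by (simp add: P_def)
  then show ?case by simp
next
  case (Suc n)
  have Pp: "real (P n) > 0" "real (Q n) > 0" using P_ge1[of n] Q_ge[of n] by auto
  have "real (Gz z (Suc n)) / real (P (Suc n)) = (real (Gz z n) * real (Q n) + real (dz z n)) / (real (P n) * real (Q n))"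
    using Gz_Suc[OF z(1), of n] by (simp add: P_Suc)
  also have "\<dots> = real (Gz z n) / real (P n) + real (dz z n) / real (P (Suc n))"
    using Pp by (simp add: P_Suc field_simps)
  finally show ?case using Suc by simp
qed

lemma Gz_lim: assumes z: "0 \<le> z" "z < 1"
  shows "(\<lambda>n. real (Gz z n) / real (P n)) \<longlonglongrightarrow> z"
proof (rule tendsto_sandwich[of "\<lambda>n. z - (1/2)^n" _ _ "\<lambda>n. z"])
  show "\<forall>\<^sub>F n in sequentially. z - (1/2)^n \<le> real (Gz z n) / real (P n)"
  proof (intro always_eventually allI)
    fix n
    have Pp: "real (P n) > 0" using P_ge1[of n] by simp
    have zp: "z * real (P n) \<ge> 0" using z Pp by simp
    have "z * real (P n) < real (Gz z n) + 1" unfolding Gz_def by (rule nat_floor_bounds(2)[OF zp])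
    then have "z < (real (Gz z n) + 1) / real (P n)" using Pp by (subst pos_less_divide_eq) auto
    then have "z - 1 / real (P n) < real (Gz z n) / real (P n)" by (simp add: add_divide_distrib)
    moreover have "1 / real (P n) \<le> (1/2)^n"
    proof -
      have "real (P (n + 0)) \<ge> 2^n * real (P 0)" by (rule P_geom)
      then have "real (P n) \<ge> 2^n" by (simp add: P_def)
      then have "1 / real (P n) \<le> 1 / 2^n" using Pp by (intro divide_left_mono) auto
      then show ?thesis by (simp add: power_one_over)
    qed
    ultimately show "z - (1/2)^n \<le> real (Gz z n) / real (P n)" by linarith
  qed
  show "\<forall>\<^sub>F n in sequentially. real (Gz z n) / real (P n) \<le> z"
  proof (intro always_eventually allI)
    fix n
    have Pp: "real (P n) > 0" using P_ge1[of n] by simp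
    have zp: "z * real (P n) \<ge> 0" using z Pp by simp
    have "real (Gz z n) \<le> z * real (P n)" unfolding Gz_def by (rule nat_floor_bounds(1)[OF zp])
    then show "real (Gz z n) / real (P n) \<le> z" using Pp by (simp add: field_simps)
  qed
  have "(\<lambda>n. (1/2::real)^n) \<longlonglongrightarrow> 0" by (rule LIMSEQ_realpow_zero) auto
  then show "(\<lambda>n. z - (1/2)^n) \<longlonglongrightarrow> z" using tendsto_diff[of "\<lambda>n. z" z sequentially] by force
  show "(\<lambda>n. z) \<longlonglongrightarrow> z" by simp
qed

lemma dz_sums: assumes z: "0 \<le> z" "z < 1"
  shows "(\<lambda>m. real (dz z m) / real (P (Suc m))) sums z"
  unfolding sums_def using Gz_partial[OF z] Gz_lim[OF z] by simp

lemma el_props: assumes sm: "sel m (yz z m)"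
  shows "el z m \<in> S m (yz z m)" "el z m < Rs m" "even (el z m)"
proof -
  have fin: "finite (S m (yz z m))" and cS: "card (S m (yz z m)) = Q m" using sel_S[OF sm] by auto
  have "dz z m < length (sorted_list_of_set (S m (yz z m)))" using cS dz_lt[of z m] by simp
  then have "el z m \<in> set (sorted_list_of_set (S m (yz z m)))" unfolding el_def by (rule nth_mem)
  then show elS: "el z m \<in> S m (yz z m)" using fin by simp
  then have "el z m \<in> EA m (yz z m)" using sel_S(1)[OF sm] by blast
  then show "el z m < Rs m" "even (el z m)" using EA_sub by auto
qed

lemma sel_yz: "sel m (yz z m)"
proof (induction m)
  case 0 then show ?case by simp
next
  case (Suc m)
  have lt: "el z m < Rs m" by (rule el_props(2)[OF Suc])
  have d: "yz z (Suc m) div Rs m = yz z m" and r: "yz z (Suc m) mod Rs m = el z m"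
    unfolding yz_Suc' using lt by auto
  show ?case using d r Suc el_props(1)[OF Suc] by simp
qed

lemma el_le: "el z m + 2 \<le> Rs m"
proof -
  have "el z m < Rs m" "even (el z m)" using el_props[OF sel_yz] by auto
  moreover have "even (Rs m)" by (subst Rs8) simp
  ultimately show ?thesis by (elim evenE) presburger
qed

definition "az z m = real (yz z m) / real (M m)"
definition "cz z m = (real (yz z m) + 1) / real (M m) - 1 / real (M (Suc m))"

lemma M_Suc_r: "real (M (Suc m)) = real (M m) * real (Rs m)" by (simp add: M_Suc)

lemma az_mono: "az z m \<le> az z (Suc m)"
proof -
  have Mp: "real (M m) > 0" "real (Rs m) > 0" using M_pos[of m] Rs_ge[of m] by auto
  have "az z m = real (yz z m * Rs m) / real (M (Suc m))" unfolding az_def M_Suc_r using Mp by simp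
  also have "\<dots> \<le> az z (Suc m)" unfolding az_def yz_Suc' using Mp M_Suc_r
    by (intro divide_right_mono) auto
  finally show ?thesis .
qed

lemma cz_anti: "cz z (Suc m) \<le> cz z m"
proof -
  have Mp: "real (M m) > 0" "real (Rs m) > 0" "real (M (Suc (Suc m))) > 0"
    using M_pos[of m] Rs_ge[of m] M_pos[of "Suc (Suc m)"] by auto
  have "cz z (Suc m) \<le> (real (yz z (Suc m)) + 1) / real (M (Suc m))"
    unfolding cz_def using Mp by simp
  also have "\<dots> \<le> (real (yz z m * Rs m) + real (Rs m) - 1) / real (M (Suc m))"
  proof (intro divide_right_mono)
    have "real (el z m) + 2 \<le> real (Rs m)" using el_le[of z m] by linarith
    then show "real (yz z (Suc m)) + 1 \<le> real (yz z m * Rs m) + real (Rs m) - 1"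
      unfolding yz_Suc' by simp
  qed (use Mp in simp)
  also have "\<dots> = cz z m" unfolding cz_def M_Suc_r using Mp by (simp add: field_simps)
  finally show ?thesis .
qed

lemma az_le_cz: "az z m \<le> cz z m"
proof -
  have Mp: "real (M m) > 0" using M_pos[of m] by simp
  have "1 / real (M (Suc m)) \<le> 1 / real (M m)" using M_mono[of m "Suc m"] Mp
    by (intro divide_left_mono) auto
  then show ?thesis unfolding az_def cz_def by (simp add: add_divide_distrib)
qed

lemma az_le_all: "az z j \<le> cz z m"
proof (cases "j \<le> m")
  case True
  have "az z j \<le> az z m" using True by (rule lift_Suc_mono_le[of "az z", OF az_mono])
  then show ?thesis using az_le_cz[of z m] by linarith
next
  case False
  then have "m \<le> j" by simp
  have "cz z j \<le> cz z m" using \<open>m \<le> j\<close> by (rule lift_Suc_antimono_le[of "cz z", OF cz_anti])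
  then show ?thesis using az_le_cz[of z j] by linarith
qed

definition "xz z = (SUP m. az z m)"

lemma xz_bounds: "az z m \<le> xz z" "xz z \<le> cz z m"
proof -
  have bdd: "bdd_above (range (az z))" by (rule bdd_aboveI[of _ "cz z 0"]) (auto intro: az_le_all)
  show "az z m \<le> xz z" unfolding xz_def by (rule cSUP_upper[OF _ bdd]) simp
  show "xz z \<le> cz z m" unfolding xz_def by (rule cSUP_least) (auto intro: az_le_all)
qed

lemma cell_xz: "cell m (xz z) = yz z m"
proof -
  have Mp: "real (M m) > 0" "real (M (Suc m)) > 0" using M_pos[of m] M_pos[of "Suc m"] by auto
  have "real (yz z m) \<le> xz z * real (M m)" using xz_bounds(1)[of z m] Mp unfolding az_def
    by (simp add: field_simps)
  moreover have "xz z * real (M m) < real (yz z m) + 1"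
  proof -
    have "1 / real (M (Suc m)) > 0" using Mp by simp
    then have "xz z < (real (yz z m) + 1) / real (M m)" using xz_bounds(2)[of z m] unfolding cz_def by linarith
    then show ?thesis using Mp by (simp add: field_simps)
  qed
  ultimately show ?thesis unfolding cell_def by (rule nat_floor_char)
qed

lemma xz_KK: "xz z \<in> KK"
proof -
  have "0 \<le> az z 0" unfolding az_def by simp
  then have x0: "0 \<le> xz z" using xz_bounds(1)[of z 0] by linarith
  have "cz z 0 < 1" unfolding cz_def using M_pos[of 1] by (simp add: M_def e_def)
  then have x1: "xz z < 1" using xz_bounds(2)[of z 0] by linarith
  show ?thesis unfolding KK_def using x0 x1 sel_yz cell_xz by simp
qed

lemma digit_xz: "digit m (xz z) = dz z m"
proof -
  have fin: "finite (S m (yz z m))" and cS: "card (S m (yz z m)) = Q m" using sel_S[OF sel_yz] by auto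
  have "yz z (Suc m) mod Rs m = el z m" unfolding yz_Suc' using el_props(2)[OF sel_yz] by simp
  then have "digit m (xz z) = card {r \<in> S m (yz z m). r < el z m}" unfolding digit_def cell_xz by simp
  also have "\<dots> = dz z m" unfolding el_def by (rule rank_nth[OF fin]) (use cS dz_lt in simp)
  finally show ?thesis .
qed

lemma surj_phi: assumes z: "0 \<le> z" "z < 1" shows "\<exists>x\<in>KK. phi x = z"
proof
  show "xz z \<in> KK" by (rule xz_KK)
  have "(\<lambda>m. fterm (xz z) m) = (\<lambda>m. real (dz z m) / real (P (Suc m)))"
    unfolding fterm_def digit_xz by simp
  then show "phi (xz z) = z" unfolding phi_def using dz_sums[OF z] sums_unique by metis
qed

end

context setting begin

lemma H_lower: assumes s: "0 < s" "s < 1" shows "hausdorff_measure s AA \<noteq> 0"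
proof -
  obtain k0 where k0: "\<forall>k\<ge>k0. 4 * 8^(Suc k) * (1 / real (M k)) powr (1-s) \<le> 1"
    using k0_exists[OF s] by blast
  define \<delta> where "\<delta> = 1 / (2 * real (M k0))"
  have Mk0: "real (M k0) > 0" using M_pos[of k0] by simp
  have dpos: "\<delta> > 0" unfolding \<delta>_def using Mk0 by simp
  have dlt: "\<delta> < 1 / real (M k0)" unfolding \<delta>_def using Mk0 by (simp add: field_simps)
  have main: "ennreal (1/2) \<le> hausdorff_pre s \<delta> AA"
    unfolding hausdorff_pre_def
  proof (rule INF_greatest, clarify)
    fix U :: "nat \<Rightarrow> real set"
    assume cov: "AA \<subseteq> (\<Union>i. U i)" and bd: "\<forall>i. bounded (U i) \<and> diameter (U i) \<le> \<delta>"
    define r where "r i = diameter (U i) powr s" for i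
    define u where "u i = (SOME u. u \<in> U i \<inter> KK)" for i
    define I where "I i = (if U i \<inter> KK = {} then {} else {phi (u i) - r i .. phi (u i) + r i})" for i
    have rpos: "\<And>i. r i \<ge> 0" unfolding r_def by simp
    have cover01: "{0..<1} \<subseteq> (\<Union>i. I i)"
    proof
      fix z :: real assume "z \<in> {0..<1}"
      then obtain x where x: "x \<in> KK" "phi x = z" using surj_phi by auto
      then have "x \<in> AA" using KK_sub_AA by blast
      then obtain i where xi: "x \<in> U i" using cov by blast
      have ne: "U i \<inter> KK \<noteq> {}" using xi x by blast
      then have ui: "u i \<in> U i \<inter> KK" unfolding u_def by (metis some_in_eq)
      have "dist x (u i) \<le> diameter (U i)"
        using diameter_bounded_bound[of "U i" x "u i"] bd xi ui by blast
      then have dxu: "\<bar>x - u i\<bar> \<le> diameter (U i)" by (simp add: dist_real_def)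
      then have "\<bar>x - u i\<bar> < 1 / real (M k0)" using bd dlt by (meson le_less_trans order_trans)
      then have "\<bar>phi x - phi (u i)\<bar> \<le> \<bar>x - u i\<bar> powr s" using holder[OF s k0 x(1)] ui by blast
      also have "\<dots> \<le> r i" unfolding r_def using dxu s by (intro powr_mono2) auto
      finally have "\<bar>z - phi (u i)\<bar> \<le> r i" using x by simp
      then have "z \<in> I i" using ne unfolding I_def by (auto simp: abs_le_iff)
      then show "z \<in> (\<Union>i. I i)" by blast
    qed
    have mI: "\<And>i. emeasure lborel (I i) \<le> ennreal (2 * r i)"
    proof -
      fix i
      show "emeasure lborel (I i) \<le> ennreal (2 * r i)"
      proof (cases "U i \<inter> KK = {}")
        case True then show ?thesis unfolding I_def by simp
      next
        case False
        then have "emeasure lborel (I i) = ennreal ((phi (u i) + r i) - (phi (u i) - r i))"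
          unfolding I_def using rpos[of i] by simp
        then show ?thesis by simp
      qed
    qed
    have setsI: "range I \<subseteq> sets lborel" unfolding I_def by auto
    have "ennreal 1 = emeasure lborel {0..<(1::real)}" by simp
    also have "\<dots> \<le> emeasure lborel (\<Union>i. I i)" by (rule emeasure_mono[OF cover01]) (use setsI in auto)
    also have "\<dots> \<le> (\<Sum>i. emeasure lborel (I i))" by (rule emeasure_subadditive_countably[OF setsI])
    also have "\<dots> \<le> (\<Sum>i. ennreal (2 * r i))" by (intro suminf_le mI) auto
    also have "\<dots> = (\<Sum>i. 2 * ennreal (r i))"
      using rpos by (simp add: ennreal_mult)
    also have "\<dots> = 2 * (\<Sum>i. ennreal (r i))" by simp
    finally have h: "1 \<le> 2 * (\<Sum>i. ennreal (r i))" by simp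
    have "ennreal (1/2) * 1 \<le> ennreal (1/2) * (2 * (\<Sum>i. ennreal (r i)))" by (rule mult_left_mono[OF h]) simp
    also have "\<dots> = (ennreal (1/2) * 2) * (\<Sum>i. ennreal (r i))" by (simp add: mult.assoc)
    also have "ennreal (1/2) * 2 = 1"
    proof -
      have "inverse (ennreal 2) = ennreal (inverse 2)" by (rule inverse_ennreal) simp
      then have "inverse 2 * (2::ennreal) = ennreal (inverse 2) * ennreal 2" by simp
      also have "\<dots> = ennreal (inverse 2 * 2)" by (rule ennreal_mult[symmetric]) auto
      finally have "inverse 2 * (2::ennreal) = 1" by simp
      then show ?thesis by simp
    qed
    finally show "ennreal (1/2) \<le> (\<Sum>i. ennreal (diameter (U i) powr s))" by (simp add: r_def)
  qed
  have "hausdorff_pre s \<delta> AA \<le> hausdorff_measure s AA"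
    unfolding hausdorff_measure_def by (rule SUP_upper) (use dpos in simp)
  then have "ennreal (1/2) \<le> hausdorff_measure s AA" using main by simp
  then show ?thesis by auto
qed

end

lemma harm_unb: "\<exists>n. (\<Sum>j<n. 1 / real (Suc j)) > B"
proof (rule ccontr)
  assume "\<not> ?thesis"
  then have b: "\<And>n. (\<Sum>j<n. 1 / real (Suc j)) \<le> B" by (simp add: not_less)
  have "summable (\<lambda>j. 1 / real (Suc j))" by (rule summableI_nonneg_bounded[OF _ b]) simp
  then have "summable (\<lambda>j. inverse (real (Suc j)))" by (simp add: divide_inverse)
  then have "summable (\<lambda>j. inverse (real j))" by (subst summable_Suc_iff[symmetric])
  then show False using not_summable_harmonic by blast
qed

lemma tile:
  fixes f :: "nat \<Rightarrow> real"
  assumes unb: "\<And>B. \<exists>n. sum f {..<n} > B" and x: "x \<ge> 0"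
  shows "\<exists>i. sum f {..<i} \<le> x \<and> x \<le> sum f {..<Suc i}"
proof -
  obtain n where n: "x < sum f {..<n}" using unb by blast
  define j where "j = (LEAST j. x < sum f {..<j})"
  have j: "x < sum f {..<j}" unfolding j_def by (rule LeastI[of _ n]) (rule n)
  have j0: "j \<noteq> 0"
  proof
    assume "j = 0" then show False using j x by simp
  qed
  then obtain i where i: "j = Suc i" by (cases j) auto
  have "\<not> x < sum f {..<i}"
  proof
    assume "x < sum f {..<i}"
    then have "j \<le> i" unfolding j_def by (rule Least_le)
    then show False using i by simp
  qed
  then show ?thesis using j i by (intro exI[of _ i]) auto
qed

lemma unb_scale:
  fixes f :: "nat \<Rightarrow> real"
  assumes c: "c > 0" and f: "\<And>j. f j \<ge> c / real (Suc j)"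
  shows "\<exists>n. sum f {..<n} > B"
proof -
  obtain n where n: "(\<Sum>j<n. 1 / real (Suc j)) > B / c" using harm_unb by blast
  have "c * (\<Sum>j<n. 1 / real (Suc j)) \<le> sum f {..<n}"
    unfolding sum_distrib_left using f by (intro sum_mono) simp
  moreover have "c * (B / c) < c * (\<Sum>j<n. 1 / real (Suc j))" by (rule mult_strict_left_mono[OF n c])
  moreover have "c * (B / c) = B" using c by simp
  ultimately have "B < sum f {..<n}" by linarith
  then show ?thesis by blast
qed

lemma H_upper: fixes X :: "real set" assumes s: "s > 1" shows "hausdorff_measure s X = 0"
proof -
  have pre0: "hausdorff_pre s \<delta> X = 0" if dpos: "\<delta> > 0" for \<delta>
  proof -
    have "hausdorff_pre s \<delta> X \<le> 0"
    proof (rule ennreal_le_epsilon)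
      fix \<eta> :: real assume eta: "0 < \<eta>"
      define g where "g n = real (Suc n) powr (-s)" for n
      have sg: "summable g"
      proof -
        have "summable (\<lambda>n. real n powr (-s))" using s by (simp add: summable_real_powr_iff)
        then show ?thesis unfolding g_def using summable_Suc_iff[of "\<lambda>n. real n powr (-s)"] by simp
      qed
      define Z where "Z = suminf g"
      have Z0: "Z \<ge> 0" unfolding Z_def g_def by (rule suminf_nonneg[OF sg[unfolded g_def]]) simp
      define c where "c = min \<delta> (min 1 (\<eta> / (Z + 1)))"
      have cpos: "c > 0" unfolding c_def using dpos eta Z0 by simp
      have c1: "c \<le> 1" and cd: "c \<le> \<delta>" and ce: "c \<le> \<eta> / (Z+1)" unfolding c_def by auto
      define lam where "lam n = c / real (Suc n)" for n
      define f where "f j = c / (2 * real j + 1)" for j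
      define f' where "f' j = c / (2 * real j + 2)" for j
      define T where "T i = sum f {..<i}" for i
      define T' where "T' i = sum f' {..<i}" for i
      define U where "U idx = (if even idx then {T (idx div 2) .. T (Suc (idx div 2))}
                               else {- T' (Suc (idx div 2)) .. - T' (idx div 2)})" for idx
      have fpos: "f j \<ge> 0" "f' j \<ge> 0" for j unfolding f_def f'_def using cpos by auto
      have lam_even: "lam (2*i) = f i" for i unfolding lam_def f_def by (simp add: add.commute)
      have lam_odd: "lam (Suc (2*i)) = f' i" for i unfolding lam_def f'_def by (simp add: add.commute)
      have diamU: "diameter (U idx) = lam idx" for idx
      proof (cases "even idx")
        case True
        then obtain i where i: "idx = 2*i" by auto
        have "T (Suc i) - T i = f i" unfolding T_def by simp
        then show ?thesis unfolding U_def using True i fpos(1)[of i] lam_even[of i] by simp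
      next
        case False
        then obtain i where i: "idx = Suc (2*i)" by (metis oddE Suc_eq_plus1)
        have "T' (Suc i) - T' i = f' i" unfolding T'_def by simp
        then show ?thesis unfolding U_def using False i fpos(2)[of i] lam_odd[of i] by simp
      qed
      have lam_le: "lam idx \<le> c" for idx unfolding lam_def using cpos by (simp add: field_simps)
      have cov: "X \<subseteq> (\<Union>idx. U idx)"
      proof
        fix x assume "x \<in> X"
        show "x \<in> (\<Union>idx. U idx)"
        proof (cases "x \<ge> 0")
          case True
          have "\<exists>n. sum f {..<n} > B" for B
            by (rule unb_scale[of "c/2"]) (use cpos in \<open>auto simp: f_def field_simps\<close>)
          then obtain i where "T i \<le> x" "x \<le> T (Suc i)" using tile[OF _ True] unfolding T_def by blast
          then have "x \<in> U (2*i)" unfolding U_def by simp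
          then show ?thesis by blast
        next
          case False
          then have nx: "-x \<ge> 0" by simp
          have "\<exists>n. sum f' {..<n} > B" for B
            by (rule unb_scale[of "c/2"]) (use cpos in \<open>auto simp: f'_def field_simps\<close>)
          then obtain i where "T' i \<le> -x" "-x \<le> T' (Suc i)" using tile[OF _ nx] unfolding T'_def by blast
          then have "x \<in> U (Suc (2*i))" unfolding U_def by simp
          then show ?thesis by blast
        qed
      qed
      have bdU: "\<forall>idx. bounded (U idx) \<and> diameter (U idx) \<le> \<delta>"
        using diamU lam_le cd unfolding U_def by (auto intro: order_trans)
      have lamg: "lam n powr s \<le> c * g n" for n
      proof -
        have "lam n powr s = c powr s * (1 / real (Suc n)) powr s"
          unfolding lam_def using cpos by (simp add: powr_mult[symmetric])
        also have "(1 / real (Suc n)) powr s = g n" unfolding g_def by (simp add: powr_minus_divide powr_divide)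
        also have "c powr s \<le> c" using cpos c1 s by (intro powr_le_one_le) auto
        then have "c powr s * g n \<le> c * g n" unfolding g_def by (intro mult_right_mono) auto
        finally show ?thesis .
      qed
      have slam: "summable (\<lambda>n. lam n powr s)"
        by (rule summable_comparison_test[of _ "\<lambda>n. c * g n"]) (use lamg sg in auto)
      have "hausdorff_pre s \<delta> X \<le> (\<Sum>idx. ennreal (diameter (U idx) powr s))"
        unfolding hausdorff_pre_def by (rule INF_lower) (use cov bdU in auto)
      also have "\<dots> = (\<Sum>idx. ennreal (lam idx powr s))" by (simp add: diamU)
      also have "\<dots> = ennreal (\<Sum>idx. lam idx powr s)" by (rule suminf_ennreal2[OF _ slam]) simp
      also have "(\<Sum>idx. lam idx powr s) \<le> (\<Sum>idx. c * g idx)"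
        by (rule suminf_le[OF lamg slam]) (use sg in simp)
      also have "(\<Sum>idx. c * g idx) = c * Z" unfolding Z_def by (rule suminf_mult[OF sg])
      also have "c * Z \<le> \<eta>"
      proof -
        have "c * Z \<le> (\<eta> / (Z+1)) * Z" using ce Z0 by (intro mult_right_mono) auto
        also have "\<dots> \<le> \<eta>" using Z0 eta by (simp add: field_simps)
        finally show ?thesis .
      qed
      finally show "hausdorff_pre s \<delta> X \<le> 0 + ennreal \<eta>" by (simp add: ennreal_leI)
    qed
    then show ?thesis by simp
  qed
  show ?thesis unfolding hausdorff_measure_def using pre0 by simp
qed


theorem theorem7:
  fixes C1 C2 \<gamma> :: real and t :: "nat \<Rightarrow> real"
  assumes "C1 > 0" and "C2 > 0" and "\<gamma> > 0"
    and "\<forall>n\<ge>1. C1 * real n powr \<gamma> \<le> t n \<and> t n \<le> C2 * real n powr \<gamma>"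
  shows "\<exists>C > 0. \<exists>n0::nat. n0 \<ge> 2 \<and>
           hausdorff_dim (\<Inter>n\<in>{n0..}. {\<xi>::real. dist_int (\<xi> * t n) > C / (real n * ln (real n))}) = 1"
proof -
  note C1 = assms(1) and C2 = assms(2) and g = assms(3) and tb = assms(4)
  define E :: nat where "E = nat \<lceil>2*\<gamma>\<rceil> + 4"
  have E: "real E \<ge> 2*\<gamma> + 4" unfolding E_def using g by linarith
  define D :: nat where "D = nat \<lceil>(real E + 1)/\<gamma>\<rceil> + 2"
  have D: "D \<ge> 2" unfolding D_def by simp
  have DE: "real D * \<gamma> \<ge> real E + 1"
  proof -
    have "real D \<ge> (real E + 1)/\<gamma>" unfolding D_def by linarith
    then have "real D * \<gamma> \<ge> ((real E + 1)/\<gamma>) * \<gamma>" using g by (intro mult_right_mono) auto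
    then show ?thesis using g by simp
  qed
  define K where "K = C2 * 768 * ln (2*real D)"
  have Kpos: "K > 0" unfolding K_def using C2 D by simp
  have ev1: "eventually (\<lambda>x::nat. K * real x \<le> 2^x) sequentially" using Kpos by real_asymp
  have ev2: "eventually (\<lambda>x::nat. 1 \<le> C1 * 2^x) sequentially" using C1 by real_asymp
  obtain a0 where a0: "\<And>x. x \<ge> a0 \<Longrightarrow> K * real x \<le> 2^x \<and> 1 \<le> C1 * 2^x"
    using eventually_conj[OF ev1 ev2] unfolding eventually_sequentially by blast
  define a where "a = max a0 2"
  have a2: "a \<ge> 2" unfolding a_def by simp
  have aC1: "C1 * 2^a \<ge> 1" using a0[of a] unfolding a_def by simp
  have aK: "\<forall>x\<ge>a. (C2 * 768 * ln (2*real D)) * real x \<le> 2^x" using a0 unfolding a_def K_def by simp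
  interpret S: setting t \<gamma> C1 C2 E D a
    by unfold_locales (use C1 C2 g tb E D DE a2 aC1 aK in auto)
  define Sset where "Sset = {s. 0 < s \<and> hausdorff_measure s S.AA = 0}"
  have ge1: "\<And>s. s \<in> Sset \<Longrightarrow> s \<ge> 1"
  proof -
    fix s assume "s \<in> Sset"
    then have "0 < s" "hausdorff_measure s S.AA = 0" unfolding Sset_def by auto
    then show "s \<ge> 1" using S.H_lower by (meson not_le)
  qed
  have gt1: "\<And>s. s > 1 \<Longrightarrow> s \<in> Sset" unfolding Sset_def using H_upper by auto
  have dim: "Inf Sset = 1"
  proof (rule antisym)
    have ne: "Sset \<noteq> {}" using gt1[of 2] by auto
    show "1 \<le> Inf Sset" by (rule cInf_greatest[OF ne]) (rule ge1)
    show "Inf Sset \<le> 1"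
    proof (rule field_le_epsilon)
      fix e :: real assume "e > 0"
      have bdd: "bdd_below Sset" by (rule bdd_belowI[of _ 1]) (rule ge1)
      have "Inf Sset \<le> 1 + e" by (rule cInf_lower[OF gt1 bdd]) (use \<open>e > 0\<close> in simp)
      then show "Inf Sset \<le> 1 + e" .
    qed
  qed
  have "S.C > 0" by (rule S.Cpos)
  moreover have "S.N 1 \<ge> 2" using S.N_ge4[of 1] by simp
  moreover have "hausdorff_dim (\<Inter>n\<in>{S.N 1..}. {\<xi>::real. dist_int (\<xi> * t n) > S.C / (real n * ln (real n))}) = 1"
    using dim unfolding hausdorff_dim_def Sset_def S.AA_def .
  ultimately show ?thesis by blast
qed


end
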